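(* Let $m,n\in\mathbb{N}$, $q\in(-1,1)\setminus\{0\}$, and $p_\pm,q_\pm\in(-1,1)\setminus\{0\}$ (so that $\alpha_\pm=p_\pm q_\pm$, $\beta_\pm=p_\pm+q_\pm$). (i) For every $\kappa\in\Lambda^{(m,n)}$ the system $$2n\xi_j+v_{p_+}(\xi_j)+v_{q_+}(\xi_j)+v_{p_-}(\xi_j)+v_{q_-}(\xi_j)+\sum_{1\le k\le m,\,k\ne j}\bigl(v_q(\xi_j+\xi_k)+v_q(\xi_j-\xi_k)\bigr)=2\pi(m+1-j+\kappa_j),\quad j=1,\dots,m,$$ has a unique solution $\xi_\kappa\in\mathbb{R}^m$, and $\xi_\kappa$ is the global minimum of the strictly convex, radially unbounded Morse function $V_\kappa$. (ii) The points $\xi_\kappa$, $\kappa\in\Lambda^{(m,n)}$, are pairwise distinct and lie in the open alcove $\mathbb{A}^m=\{\xi\in\mathbb{R}^m\mid\pi>\xi_1>\xi_2>\cdots>\xi_m>0\}$. Moreover, $\xi=\xi_\kappa$ satisfies $$\frac{\pi(m+1-j+\kappa_j)}{n+K_+}\le\xi_j\le\frac{\pi(m+1-j+\kappa_j)}{n+K_-}\quad(1\le j\le m),$$ $$\frac{\pi(k-j+\kappa_j-\kappa_k)}{n+K_+}\le\xi_j-\xi_k\le\frac{\pi(k-j+\kappa_j-\kappa_k)}{n+K_-}\quad(1\le j<k\le m),$$ where $K_\pm=(m-1)\left(\frac{1+|q|}{1-|q|}\right)^{\pm1}+\frac12\left(\left(\frac{1+|p_+|}{1-|p_+|}\ri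ght)^{\pm1}+\left(\frac{1+|q_+|}{1-|q_+|}\right)^{\pm1}+\left(\frac{1+|p_-|}{1-|p_-|}\right)^{\pm1}+\left(\frac{1+|q_-|}{1-|q_-|}\right)^{\pm1}\right)$.
   Context: $\Lambda^{(m,n)}=\{\kappa\in\mathbb{Z}^m\mid n\ge\kappa_1\ge\kappa_2\ge\cdots\ge\kappa_m\ge0\}$. For $-1<a<1$, $v_a(z)=\int_0^z\frac{(1-a^2)\,dx}{1-2a\cos(x)+a^2}$. For $\kappa\in\Lambda^{(m,n)}$, $V_\kappa(\xi_1,\dots,\xi_m)=\sum_{1\le j<k\le m}\Bigl(\int_0^{\xi_j+\xi_k}v_q(x)\,dx+\int_0^{\xi_j-\xi_k}v_q(x)\,dx\Bigr)+\sum_{1\le j\le m}\Bigl(n\xi_j^2-2\pi(m+1-j+\kappa_j)\xi_j+\int_0^{\xi_j}\bigl(v_{p_+}(x)+v_{q_+}(x)+v_{p_-}(x)+v_{q_-}(x)\bigr)dx\Bigr)$. *)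

theory Defs
  imports "HOL-Analysis.Analysis"
begin

text \<open>Points of R^m are modelled as functions nat => real supported on {1..m}.\<close>

definition Rm :: "nat \<Rightarrow> (nat \<Rightarrow> real) set" where
  "Rm m = {\<xi>. \<forall>j. j \<notin> {1..m} \<longrightarrow> \<xi> j = 0}"

definition Lambda :: "nat \<Rightarrow> nat \<Rightarrow> (nat \<Rightarrow> nat) set" where
  "Lambda m n = {\<kappa>. (\<forall>j\<in>{1..m}. \<kappa> j \<le> n)
                    \<and> (\<forall>j k. 1 \<le> j \<longrightarrow> j \<le> k \<longrightarrow> k \<le> m \<longrightarrow> \<kappa> k \<le> \<kappa> j)
                    \<and> (\<forall>j. j \<notin> {1..m} \<longrightarrow> \<kappa> j = 0)}"

definition oint :: "(real \<Rightarrow> real) \<Rightarrow> real \<Rightarrow> real \<Rightarrow> real" where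
  "oint f a b = (if a \<le> b then integral {a..b} f else - integral {b..a} f)"

definition vfun :: "real \<Rightarrow> real \<Rightarrow> real" where
  "vfun a z = oint (\<lambda>x. (1 - a\<^sup>2) / (1 - 2 * a * cos x + a\<^sup>2)) 0 z"

definition Vfun :: "nat \<Rightarrow> nat \<Rightarrow> real \<Rightarrow> real \<Rightarrow> real \<Rightarrow> real \<Rightarrow> real \<Rightarrow> (nat \<Rightarrow> nat)
                     \<Rightarrow> (nat \<Rightarrow> real) \<Rightarrow> real" where
  "Vfun m n q pp qp pm qm \<kappa> \<xi> =
     (\<Sum>j=1..m. \<Sum>k=Suc j..m.
        oint (vfun q) 0 (\<xi> j + \<xi> k) + oint (vfun q) 0 (\<xi> j - \<xi> k))
   + (\<Sum>j=1..m. real n * (\<xi> j)\<^sup>2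
        - 2 * pi * (real m + 1 - real j + real (\<kappa> j)) * \<xi> j
        + oint (\<lambda>x. vfun pp x + vfun qp x + vfun pm x + vfun qm x) 0 (\<xi> j))"

definition BAE :: "nat \<Rightarrow> nat \<Rightarrow> real \<Rightarrow> real \<Rightarrow> real \<Rightarrow> real \<Rightarrow> real \<Rightarrow> (nat \<Rightarrow> nat)
                     \<Rightarrow> (nat \<Rightarrow> real) \<Rightarrow> bool" where
  "BAE m n q pp qp pm qm \<kappa> \<xi> \<longleftrightarrow>
     (\<forall>j\<in>{1..m}. 2 * real n * \<xi> j + vfun pp (\<xi> j) + vfun qp (\<xi> j) + vfun pm (\<xi> j) + vfun qm (\<xi> j)
        + (\<Sum>k\<in>{1..m} - {j}. vfun q (\<xi> j + \<xi> k) + vfun q (\<xi> j - \<xi> k))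
        = 2 * pi * (real m + 1 - real j + real (\<kappa> j)))"

definition strictly_convex_Rm :: "nat \<Rightarrow> ((nat \<Rightarrow> real) \<Rightarrow> real) \<Rightarrow> bool" where
  "strictly_convex_Rm m f \<longleftrightarrow>
     (\<forall>x\<in>Rm m. \<forall>y\<in>Rm m. \<forall>t::real. x \<noteq> y \<longrightarrow> 0 < t \<longrightarrow> t < 1 \<longrightarrow>
        f (\<lambda>i. (1 - t) * x i + t * y i) < (1 - t) * f x + t * f y)"

definition eucl_norm :: "nat \<Rightarrow> (nat \<Rightarrow> real) \<Rightarrow> real" where
  "eucl_norm m \<xi> = sqrt (\<Sum>j=1..m. (\<xi> j)\<^sup>2)"

definition radially_unbounded_Rm :: "nat \<Rightarrow> ((nat \<Rightarrow> real) \<Rightarrow> real) \<Rightarrow> bool" where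
  "radially_unbounded_Rm m f \<longleftrightarrow>
     (\<forall>B. \<exists>R. \<forall>\<xi>\<in>Rm m. eucl_norm m \<xi> \<ge> R \<longrightarrow> f \<xi> \<ge> B)"

definition pd :: "((nat \<Rightarrow> real) \<Rightarrow> real) \<Rightarrow> (nat \<Rightarrow> real) \<Rightarrow> nat \<Rightarrow> real" where
  "pd f \<xi> j = deriv (\<lambda>t. f (\<xi>(j := t))) (\<xi> j)"

definition hess :: "((nat \<Rightarrow> real) \<Rightarrow> real) \<Rightarrow> (nat \<Rightarrow> real) \<Rightarrow> nat \<Rightarrow> nat \<Rightarrow> real" where
  "hess f \<xi> j k = pd (\<lambda>\<eta>. pd f \<eta> k) \<xi> j"

definition C2_Rm :: "nat \<Rightarrow> ((nat \<Rightarrow> real) \<Rightarrow> real) \<Rightarrow> bool" where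
  "C2_Rm m f \<longleftrightarrow>
     (\<forall>\<xi>\<in>Rm m. \<forall>j\<in>{1..m}. (\<lambda>t. f (\<xi>(j := t))) differentiable (at (\<xi> j))
        \<and> (\<forall>k\<in>{1..m}. (\<lambda>t. pd f (\<xi>(j := t)) k) differentiable (at (\<xi> j))))
   \<and> (\<forall>j\<in>{1..m}. continuous_on (Rm m) (\<lambda>\<xi>. pd f \<xi> j))
   \<and> (\<forall>j\<in>{1..m}. \<forall>k\<in>{1..m}. continuous_on (Rm m) (\<lambda>\<xi>. hess f \<xi> j k))"

definition morse_Rm :: "nat \<Rightarrow> ((nat \<Rightarrow> real) \<Rightarrow> real) \<Rightarrow> bool" where
  "morse_Rm m f \<longleftrightarrow> C2_Rm m f \<and>
     (\<forall>\<xi>\<in>Rm m. (\<forall>j\<in>{1..m}. pd f \<xi> j = 0) \<longrightarrow>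
        (\<forall>h\<in>Rm m. (\<forall>j\<in>{1..m}. (\<Sum>k=1..m. hess f \<xi> j k * h k) = 0) \<longrightarrow> h = (\<lambda>_. 0)))"

definition ratio :: "real \<Rightarrow> real" where
  "ratio a = (1 + \<bar>a\<bar>) / (1 - \<bar>a\<bar>)"

definition Kplus :: "nat \<Rightarrow> real \<Rightarrow> real \<Rightarrow> real \<Rightarrow> real \<Rightarrow> real \<Rightarrow> real" where
  "Kplus m q pp qp pm qm = (real m - 1) * ratio q
     + (ratio pp + ratio qp + ratio pm + ratio qm) / 2"

definition Kminus :: "nat \<Rightarrow> real \<Rightarrow> real \<Rightarrow> real \<Rightarrow> real \<Rightarrow> real \<Rightarrow> real" where
  "Kminus m q pp qp pm qm = (real m - 1) * inverse (ratio q)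
     + (inverse (ratio pp) + inverse (ratio qp) + inverse (ratio pm) + inverse (ratio qm)) / 2"

end

theory Submission
  imports Defs
begin

definition PK :: "real \<Rightarrow> real \<Rightarrow> real" where
  "PK a x = (1 - a\<^sup>2) / (1 - 2 * a * cos x + a\<^sup>2)"
definition wf :: "real \<Rightarrow> real \<Rightarrow> real" where
  "wf a x = x + 2 * arctan (a * sin x / (1 - a * cos x))"

lemma acos_lt: "\<bar>a\<bar> < 1 \<Longrightarrow> a * cos x < (1::real)"
proof -
  assume a: "\<bar>a\<bar> < 1"
  have "\<bar>a * cos x\<bar> \<le> \<bar>a\<bar>" unfolding abs_mult by (metis abs_cos_le_one abs_ge_zero mult_left_le)
  then show ?thesis using a by linarith
qed

lemma denom_bounds:
  fixes a x :: real
  assumes "\<bar>a\<bar> < 1"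
  shows "(1 - \<bar>a\<bar>)\<^sup>2 \<le> 1 - 2 * a * cos x + a\<^sup>2" "1 - 2 * a * cos x + a\<^sup>2 \<le> (1 + \<bar>a\<bar>)\<^sup>2"
proof -
  have "\<bar>a * cos x\<bar> \<le> \<bar>a\<bar>" unfolding abs_mult by (metis abs_cos_le_one abs_ge_zero mult_left_le)
  then have h: "- \<bar>a\<bar> \<le> a * cos x" "a * cos x \<le> \<bar>a\<bar>" by linarith+
  have sq: "a\<^sup>2 = \<bar>a\<bar>\<^sup>2" by simp
  show "(1 - \<bar>a\<bar>)\<^sup>2 \<le> 1 - 2 * a * cos x + a\<^sup>2" using h unfolding sq by (simp add: power2_eq_square algebra_simps)
  show "1 - 2 * a * cos x + a\<^sup>2 \<le> (1 + \<bar>a\<bar>)\<^sup>2" using h unfolding sq by (simp add: power2_eq_square algebra_simps)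
qed

lemma PK_bounds:
  fixes a x :: real
  assumes a: "\<bar>a\<bar> < 1"
  shows "inverse (ratio a) \<le> PK a x" "PK a x \<le> ratio a" "0 < PK a x"
proof -
  note d = denom_bounds[OF a, of x]
  have p1: "0 < 1 - \<bar>a\<bar>" using a by simp
  have p2: "0 < 1 + \<bar>a\<bar>" using a by simp
  have num: "1 - a\<^sup>2 = (1 - \<bar>a\<bar>) * (1 + \<bar>a\<bar>)" by (simp add: power2_eq_square algebra_simps)
  have Dpos: "0 < 1 - 2 * a * cos x + a\<^sup>2" using d(1) p1 by (smt (verit) zero_less_power)
  have npos: "0 < 1 - a\<^sup>2" using num p1 p2 by simp
  show "0 < PK a x" unfolding PK_def using Dpos npos by simp
  have "PK a x \<le> (1 - a\<^sup>2) / (1 - \<bar>a\<bar>)\<^sup>2" unfolding PK_def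
    using d(1) npos p1 Dpos by (intro divide_left_mono) auto
  also have "\<dots> = ratio a" unfolding num ratio_def using p1 by (simp add: power2_eq_square)
  finally show "PK a x \<le> ratio a" .
  have "inverse (ratio a) = (1 - a\<^sup>2) / (1 + \<bar>a\<bar>)\<^sup>2" unfolding num ratio_def using p2 by (simp add: power2_eq_square)
  also have "\<dots> \<le> PK a x" unfolding PK_def
    using d(2) npos Dpos by (intro divide_left_mono) auto
  finally show "inverse (ratio a) \<le> PK a x" .
qed

lemma wf_deriv:
  fixes a x :: real
  assumes a: "\<bar>a\<bar> < 1"
  shows "(wf a has_real_derivative PK a x) (at x)"
proof -
  define c where "c = 1 - a * cos x"
  have c: "0 < c" using acos_lt[OF a] by (simp add: c_def)
  have D: "c\<^sup>2 + (a * sin x)\<^sup>2 = 1 - 2 * a * cos x + a\<^sup>2"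
    unfolding c_def by (simp add: power2_eq_square algebra_simps) (metis sin_cos_squared_add3 distrib_left mult_1_right)
  have Dpos: "0 < 1 - 2 * a * cos x + a\<^sup>2" using D c by (smt (verit) zero_le_power2 zero_less_power)
  define g where "g = a * sin x / c"
  have g1: "1 + g\<^sup>2 = (1 - 2 * a * cos x + a\<^sup>2) / c\<^sup>2"
    unfolding g_def using c D[symmetric] by (simp add: field_simps power2_eq_square)
  have dg: "((\<lambda>x. a * sin x / (1 - a * cos x)) has_real_derivative (a * cos x * c - a * sin x * (a * sin x)) / c\<^sup>2) (at x)"
    apply (rule DERIV_cong[OF DERIV_divide[OF DERIV_cmult[OF DERIV_sin] DERIV_diff[OF DERIV_const DERIV_cmult[OF DERIV_cos]]]])
    using c by (auto simp: c_def power2_eq_square)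
  have num: "a * cos x * c - a * sin x * (a * sin x) = a * cos x - a\<^sup>2"
    unfolding c_def by (simp add: power2_eq_square algebra_simps) (metis sin_cos_squared_add3 distrib_left mult_1_right mult.assoc)
  have da: "((\<lambda>x. arctan (a * sin x / (1 - a * cos x))) has_real_derivative
      inverse (1 + g\<^sup>2) * ((a * cos x - a\<^sup>2) / c\<^sup>2)) (at x)"
    using DERIV_chain2[OF DERIV_arctan dg] num by (simp add: g_def c_def)
  have e: "inverse (1 + g\<^sup>2) * ((a * cos x - a\<^sup>2) / c\<^sup>2) = (a * cos x - a\<^sup>2) / (1 - 2 * a * cos x + a\<^sup>2)"
  proof -
    define Dv where "Dv = 1 - 2 * a * cos x + a\<^sup>2"
    define N where "N = a * cos x - a\<^sup>2"
    have "inverse (Dv / c\<^sup>2) * (N / c\<^sup>2) = N / Dv" using c Dpos unfolding Dv_def[symmetric]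
      by (simp add: field_simps)
    then show ?thesis unfolding g1 Dv_def N_def .
  qed
  have da': "((\<lambda>x. arctan (a * sin x / (1 - a * cos x))) has_real_derivative
      (a * cos x - a\<^sup>2) / (1 - 2 * a * cos x + a\<^sup>2)) (at x)"
    using da unfolding e .
  have "(wf a has_real_derivative 1 + 2 * ((a * cos x - a\<^sup>2) / (1 - 2 * a * cos x + a\<^sup>2))) (at x)"
    unfolding wf_def by (rule DERIV_add[OF DERIV_ident DERIV_cmult[OF da']])
  moreover have "1 + 2 * ((a * cos x - a\<^sup>2) / (1 - 2 * a * cos x + a\<^sup>2)) = PK a x"
    unfolding PK_def using Dpos by (simp add: field_simps)
  ultimately show ?thesis by simp
qed


lemma slope_bounds:
  fixes f f' :: "real \<Rightarrow> real"
  assumes d: "\<And>x. (f has_real_derivative f' x) (at x)"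
    and lo: "\<And>x. lo \<le> f' x" and hi: "\<And>x. f' x \<le> hi" and yx: "y \<le> x"
  shows "lo * (x - y) \<le> f x - f y \<and> f x - f y \<le> hi * (x - y)"
proof (cases "y = x")
  case True then show ?thesis by simp
next
  case False
  then have "y < x" using yx by simp
  then obtain z where "f x - f y = (x - y) * f' z" using MVT2[of y x f f'] d by blast
  moreover have "lo * (x - y) \<le> (x - y) * f' z" "(x - y) * f' z \<le> hi * (x - y)"
    using lo[of z] hi[of z] yx by (simp_all add: mult.commute mult_right_mono)
  ultimately show ?thesis by simp
qed

lemma oint_deriv:
  fixes f :: "real \<Rightarrow> real"
  assumes c: "continuous_on UNIV f"
  shows "((\<lambda>z. oint f 0 z) has_real_derivative f x) (at x)"
proof -
  define a where "a = min 0 x - 1"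
  define b where "b = max 0 x + 1"
  have cab: "continuous_on {a..b} f" using c continuous_on_subset by blast
  have eq: "integral {a..u} f - integral {a..0} f = oint f 0 u" if u: "u \<in> {a<..<b}" for u
  proof (cases "0 \<le> u")
    case True
    have "integral {a..0} f + integral {0..u} f = integral {a..u} f"
      using Henstock_Kurzweil_Integration.integral_combine[of a 0 u f] True u a_def integrable_continuous_real[OF continuous_on_subset[OF c]] by auto
    then show ?thesis using True by (simp add: oint_def)
  next
    case False
    have "integral {a..u} f + integral {u..0} f = integral {a..0} f"
      using Henstock_Kurzweil_Integration.integral_combine[of a u 0 f] False u a_def integrable_continuous_real[OF continuous_on_subset[OF c]] by auto
    then show ?thesis using False by (simp add: oint_def)
  qed
  have x: "x \<in> {a..b}" "x \<in> {a<..<b}" by (auto simp: a_def b_def)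
  have "((\<lambda>u. integral {a..u} f) has_real_derivative f x) (at x)"
    using integral_has_real_derivative[OF cab x(1)] at_within_interior[of x "{a..b}"] x(2) by simp
  then have d: "((\<lambda>u. integral {a..u} f - integral {a..0} f) has_real_derivative f x) (at x)"
  proof -
    have "((\<lambda>u. integral {a..u} f - integral {a..0} f) has_real_derivative f x - 0) (at x)"
      by (rule DERIV_diff[OF \<open>((\<lambda>u. integral {a..u} f) has_real_derivative f x) (at x)\<close> DERIV_const])
    then show ?thesis by simp
  qed
  show ?thesis
    by (rule has_field_derivative_transform_within_open[OF d, of "{a<..<b}"]) (use eq x in auto)
qed

lemma vfun_eq:
  fixes a z :: real
  assumes a: "\<bar>a\<bar> < 1"
  shows "vfun a z = wf a z"
proof -
  have pk: "(\<lambda>x. (1 - a\<^sup>2) / (1 - 2 * a * cos x + a\<^sup>2)) = PK a" by (simp add: PK_def fun_eq_iff)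
  have w0: "wf a 0 = 0" by (simp add: wf_def)
  have ftc: "integral {u..v} (PK a) = wf a v - wf a u" if "u \<le> v" for u v
  proof -
    have "(PK a has_integral (wf a v - wf a u)) {u..v}"
      by (rule fundamental_theorem_of_calculus[OF that])
        (auto simp: has_real_derivative_iff_has_vector_derivative[symmetric] intro: has_field_derivative_at_within wf_deriv[OF a])
    then show ?thesis by (rule integral_unique)
  qed
  show ?thesis unfolding vfun_def oint_def pk using ftc[of 0 z] ftc[of z 0] w0 by auto
qed

lemma wf_odd: "wf a (- x) = - wf a x"
  by (simp add: wf_def arctan_minus[symmetric])

lemma wf_zero[simp]: "wf a 0 = 0" by (simp add: wf_def)

lemma wf_pi: "wf a (pi + y) + wf a (pi - y) = 2 * pi"
proof -
  have "arctan (a * sin (pi + y) / (1 - a * cos (pi + y))) = - arctan (a * sin (pi - y) / (1 - a * cos (pi - y)))"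
    by (simp add: sin_add cos_add sin_diff cos_diff arctan_minus[symmetric])
  then show ?thesis by (simp add: wf_def)
qed

lemma wf_cont: "\<bar>a\<bar> < 1 \<Longrightarrow> continuous_on UNIV (wf a)"
  using wf_deriv by (meson DERIV_isCont continuous_at_imp_continuous_on)

lemma PK_cont: "\<bar>a\<bar> < 1 \<Longrightarrow> continuous_on UNIV (PK a)"
  unfolding PK_def using denom_bounds
  apply (intro continuous_intros)
  by (smt (verit, ccfv_threshold) zero_less_power)


lemma compact_box:
  assumes "\<And>i. compact (S i :: real set)"
  shows "compact (Pi UNIV S)"
proof -
  have "compactin (product_topology (\<lambda>i. euclidean) UNIV) (PiE UNIV S)"
    using assms by (simp add: compactin_PiE)
  then show ?thesis by (simp add: euclidean_product_topology PiE_UNIV_domain)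
qed

lemma coord_cont[continuous_intros]: "continuous_on S (\<lambda>x::nat \<Rightarrow> real. x i)"
  by (rule continuous_on_subset[OF continuous_on_product_coordinates]) simp

definition dl :: "nat \<Rightarrow> nat \<Rightarrow> real" where "dl a j = (if a = j then 1 else 0)"

lemma upd_deriv: "((\<lambda>t. (\<xi>(j:=t)) a) has_real_derivative dl a j) (at t0)"
  by (cases "a = j") (auto simp: dl_def intro: DERIV_ident DERIV_const)

lemma sum_dl: "j \<in> A \<Longrightarrow> finite A \<Longrightarrow> (\<Sum>a\<in>A. f a * dl a j) = f j"
proof -
  assume "j \<in> A" "finite A"
  have "(\<Sum>a\<in>A. f a * dl a j) = (\<Sum>a\<in>A. if a = j then f a else 0)" by (intro sum.cong) (auto simp: dl_def)
  then show ?thesis using \<open>j \<in> A\<close> \<open>finite A\<close> by simp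
qed

lemma sum_dl': "j \<in> A \<Longrightarrow> finite A \<Longrightarrow> (\<Sum>a\<in>A. dl a j * f a) = f j"
  using sum_dl[of j A f] by (simp add: mult.commute)

lemma pair_sum:
  fixes h :: "nat \<Rightarrow> nat \<Rightarrow> real"
  shows "(\<Sum>a=1..m. \<Sum>k\<in>{1..m} - {a}. h a k) = (\<Sum>a=1..m. \<Sum>b=Suc a..m. h a b + h b a)"
proof -
  have split: "(\<Sum>k\<in>{1..m} - {a}. h a k) = (\<Sum>k=1..m. if a < k then h a k else 0) + (\<Sum>k=1..m. if k < a then h a k else 0)"
    if "a \<in> {1..m}" for a
  proof -
    have "(\<Sum>k\<in>{1..m} - {a}. h a k) = (\<Sum>k\<in>{1..m} - {a}. (if a < k then h a k else 0) + (if k < a then h a k else 0))"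
      by (rule sum.cong) auto
    also have "\<dots> = (\<Sum>k\<in>{1..m}. (if a < k then h a k else 0) + (if k < a then h a k else 0))"
      by (rule sum.mono_neutral_left) auto
    finally show ?thesis by (simp add: sum.distrib)
  qed
  have s1: "(\<Sum>k=1..m. if a < k then h a k else 0) = (\<Sum>b=Suc a..m. h a b)" if "a \<in> {1..m}" for a
  proof -
    have "(\<Sum>k=1..m. if a < k then h a k else 0) = (\<Sum>k\<in>{1..m} \<inter> {k. a < k}. h a k)"
      by (simp add: sum.inter_restrict)
    also have "{1..m} \<inter> {k. a < k} = {Suc a..m}" using that by auto
    finally show ?thesis .
  qed
  have s2: "(\<Sum>a=1..m. \<Sum>k=1..m. if k < a then h a k else 0) = (\<Sum>k=1..m. \<Sum>a=Suc k..m. h a k)"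
  proof -
    have "(\<Sum>a=1..m. \<Sum>k=1..m. if k < a then h a k else 0) = (\<Sum>k=1..m. \<Sum>a=1..m. if k < a then h a k else 0)"
      by (rule sum.swap)
    also have "\<dots> = (\<Sum>k=1..m. \<Sum>a=Suc k..m. h a k)"
    proof (rule sum.cong[OF refl])
      fix k assume k: "k \<in> {1..m}"
      have "(\<Sum>a=1..m. if k < a then h a k else 0) = (\<Sum>a\<in>{1..m} \<inter> {a. k < a}. h a k)"
        by (simp add: sum.inter_restrict)
      also have "{1..m} \<inter> {a. k < a} = {Suc k..m}" using k by auto
      finally show "(\<Sum>a=1..m. if k < a then h a k else 0) = (\<Sum>a=Suc k..m. h a k)" .
    qed
    finally show ?thesis .
  qed
  have "(\<Sum>a=1..m. \<Sum>k\<in>{1..m} - {a}. h a k) = (\<Sum>a=1..m. \<Sum>b=Suc a..m. h a b) + (\<Sum>a=1..m. \<Sum>b=Suc a..m. h b a)"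
    using split s1 s2 by (simp add: sum.distrib)
  then show ?thesis by (simp add: sum.distrib)
qed

lemma pair_swap:
  fixes f :: "nat \<Rightarrow> nat \<Rightarrow> real"
  shows "(\<Sum>k=1..m. \<Sum>l\<in>{1..m} - {k}. f k l) = (\<Sum>k=1..m. \<Sum>l\<in>{1..m} - {k}. f l k)"
proof -
  have e: "(\<Sum>l\<in>{1..m} - {k}. g l) = (\<Sum>l=1..m. if l \<noteq> k then g l else 0)" for g :: "nat \<Rightarrow> real" and k
  proof -
    have "(\<Sum>l=1..m. if l \<noteq> k then g l else 0) = sum g ({1..m} \<inter> {l. l \<noteq> k})"
      by (simp add: sum.inter_restrict)
    also have "{1..m} \<inter> {l. l \<noteq> k} = {1..m} - {k}" by auto
    finally show ?thesis by simp
  qed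
  show ?thesis unfolding e
    by (subst sum.swap) (rule sum.cong, auto intro: sum.cong)
qed


lemma ratio_pos: "\<bar>a\<bar> < 1 \<Longrightarrow> 0 < ratio a"
  unfolding ratio_def by (auto intro!: divide_pos_pos)

lemma wf_slope:
  fixes a :: real assumes a: "\<bar>a\<bar> < 1" and yx: "y \<le> x"
  shows "inverse (ratio a) * (x - y) \<le> wf a x - wf a y \<and> wf a x - wf a y \<le> ratio a * (x - y)"
  using slope_bounds[of "wf a" "PK a" "inverse (ratio a)" "ratio a" y x] wf_deriv[OF a] PK_bounds[OF a] yx by blast

lemma wf_mono: "\<bar>a\<bar> < 1 \<Longrightarrow> y \<le> x \<Longrightarrow> wf a y \<le> wf a x"
  using wf_slope[of a y x] ratio_pos[of a]
  by (smt (verit, best) inverse_positive_iff_positive mult_nonneg_nonneg)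

lemma wf_strict: "\<bar>a\<bar> < 1 \<Longrightarrow> y < x \<Longrightarrow> wf a y < wf a x"
  using wf_slope[of a y x] ratio_pos[of a]
  by (smt (verit, best) inverse_positive_iff_positive mult_pos_pos)

lemma PK_even: "PK a (- x) = PK a x" by (simp add: PK_def)

lemma tangent_ineq:
  fixes F f :: "real \<Rightarrow> real"
  assumes d: "\<And>x. (F has_real_derivative f x) (at x)" and mono: "\<And>x y. x \<le> y \<Longrightarrow> f x \<le> f y"
  shows "F x + f x * (y - x) \<le> F y"
proof (cases "x = y")
  case True then show ?thesis by simp
next
  case False
  show ?thesis
  proof (cases "x < y")
    case True
    then obtain z where z: "x < z" "z < y" "F y - F x = (y - x) * f z" using MVT2[of x y F f] d by blast
    have "f x * (y - x) \<le> f z * (y - x)" using mono[of x z] z True by (intro mult_right_mono) auto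
    moreover have "F y - F x = f z * (y - x)" using z(3) by (simp add: mult.commute)
    ultimately show ?thesis by linarith
  next
    case False
    then have "y < x" using \<open>x \<noteq> y\<close> by simp
    then obtain z where z: "y < z" "z < x" "F x - F y = (x - y) * f z" using MVT2[of y x F f] d by blast
    have "f z * (x - y) \<le> f x * (x - y)" using mono[of z x] z \<open>y < x\<close> by (intro mult_right_mono) auto
    moreover have "F x - F y = f z * (x - y)" using z(3) by (simp add: mult.commute)
    ultimately show ?thesis by (simp add: algebra_simps)
  qed
qed

lemma strict_convex_1d:
  fixes F f :: "real \<Rightarrow> real"
  assumes d: "\<And>x. (F has_real_derivative f x) (at x)" and mono: "\<And>x y. x < y \<Longrightarrow> f x < f y"
    and xy: "x \<noteq> y" and t: "0 < t" "t < 1"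
  shows "F ((1 - t) * x + t * y) < (1 - t) * F x + t * F y"
proof -
  define z where "z = (1 - t) * x + t * y"
  have gen: "F ((1 - t) * x + t * y) < (1 - t) * F x + t * F y" if xy: "x < y" and t: "0 < t" "t < 1" for x y t :: real
  proof -
    define z where "z = (1 - t) * x + t * y"
    have zx: "z - x = t * (y - x)" "y - z = (1 - t) * (y - x)" by (simp_all add: z_def algebra_simps)
    have p1: "0 < t * (y - x)" "0 < (1 - t) * (y - x)" using xy t by (simp_all add: mult_pos_pos)
    have xz1: "x < z" using zx(1) p1(1) by linarith
    have xz2: "z < y" using zx(2) p1(2) by linarith
    note xz = xz1 xz2
    obtain c1 where c1: "x < c1" "c1 < z" "F z - F x = (z - x) * f c1" using MVT2[of x z F f] d xz by blast
    obtain c2 where c2: "z < c2" "c2 < y" "F y - F z = (y - z) * f c2" using MVT2[of z y F f] d xz by blast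
    have fc: "f c1 < f c2" using mono c1 c2 by simp
    have "(1 - t) * F x + t * F y - F z = (1 - t) * (F x - F z) + t * (F y - F z)" by (simp add: algebra_simps)
    also have "\<dots> = t * (1 - t) * (y - x) * (f c2 - f c1)"
    proof -
      have e1: "F x - F z = - (t * (y - x)) * f c1" using c1(3) zx(1) by (simp add: algebra_simps)
      have e2: "F y - F z = ((1 - t) * (y - x)) * f c2" using c2(3) zx(2) by simp
      show ?thesis unfolding e1 e2 by (simp add: algebra_simps)
    qed
    also have "\<dots> > 0" using t xy fc by (intro mult_pos_pos) auto
    finally show ?thesis unfolding z_def by simp
  qed
  show ?thesis
  proof (cases "x < y")
    case True then show ?thesis using gen t by blast
  next
    case False
    then have "y < x" using xy by simp
    from gen[OF this, of "1 - t"] t show ?thesis by (simp add: algebra_simps)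
  qed
qed

lemma convex_1d:
  fixes F f :: "real \<Rightarrow> real"
  assumes d: "\<And>x. (F has_real_derivative f x) (at x)" and mono: "\<And>x y. x < y \<Longrightarrow> f x < f y"
    and t: "0 < t" "t < 1"
  shows "F ((1 - t) * x + t * y) \<le> (1 - t) * F x + t * F y"
proof (cases "x = y")
  case True then show ?thesis by (simp add: algebra_simps)
next
  case False then show ?thesis using strict_convex_1d[OF d mono False t] by simp
qed


locale ctx =
  fixes m n :: nat and q pp qp pm qm :: real
  assumes aq: "\<bar>q\<bar> < 1" and app: "\<bar>pp\<bar> < 1" and aqp: "\<bar>qp\<bar> < 1"
    and apm: "\<bar>pm\<bar> < 1" and aqm: "\<bar>qm\<bar> < 1"
begin

definition W :: "real \<Rightarrow> real" where "W x = wf pp x + wf qp x + wf pm x + wf qm x"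
definition W' :: "real \<Rightarrow> real" where "W' x = PK pp x + PK qp x + PK pm x + PK qm x"
definition cc :: "(nat \<Rightarrow> nat) \<Rightarrow> nat \<Rightarrow> real" where "cc \<kappa> j = real m + 1 - real j + real (\<kappa> j)"
definition G :: "(nat \<Rightarrow> nat) \<Rightarrow> (nat \<Rightarrow> real) \<Rightarrow> nat \<Rightarrow> real" where
  "G \<kappa> \<xi> j = 2 * real n * \<xi> j + W (\<xi> j) + (\<Sum>k\<in>{1..m} - {j}. wf q (\<xi> j + \<xi> k) + wf q (\<xi> j - \<xi> k))
     - 2 * pi * cc \<kappa> j"
definition H :: "(nat \<Rightarrow> real) \<Rightarrow> nat \<Rightarrow> nat \<Rightarrow> real" where
  "H \<xi> j k = 2 * real n * dl k j + W' (\<xi> k) * dl k j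
     + (\<Sum>l\<in>{1..m} - {k}. PK q (\<xi> k + \<xi> l) * (dl k j + dl l j) + PK q (\<xi> k - \<xi> l) * (dl k j - dl l j))"
definition c0 :: real where "c0 = inverse (ratio pp) + inverse (ratio qp) + inverse (ratio pm) + inverse (ratio qm)"

abbreviation V where "V \<kappa> \<equiv> Vfun m n q pp qp pm qm \<kappa>"

lemma vq: "vfun q = wf q" using vfun_eq[OF aq] by (simp add: fun_eq_iff)
lemma vsum: "(\<lambda>x. vfun pp x + vfun qp x + vfun pm x + vfun qm x) = W"
  using vfun_eq app aqp apm aqm by (simp add: fun_eq_iff W_def)

lemma W_deriv: "(W has_real_derivative W' x) (at x)"
  unfolding W_def[abs_def] W'_def
  by (intro DERIV_add wf_deriv app aqp apm aqm)

lemma W_cont: "continuous_on UNIV W"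
  using W_deriv by (meson DERIV_isCont continuous_at_imp_continuous_on)

lemma c0_pos: "0 < c0" unfolding c0_def using ratio_pos app aqp apm aqm
  by (simp add: add_pos_pos)

lemma W'_lb: "c0 \<le> W' x"
  unfolding c0_def W'_def using PK_bounds(1) app aqp apm aqm by (smt (verit))

lemma W_strict: "x < y \<Longrightarrow> W x < W y"
  unfolding W_def using wf_strict app aqp apm aqm by (smt (verit))

lemma Phi_deriv: "((\<lambda>z. oint (vfun q) 0 z) has_real_derivative wf q x) (at x)"
  unfolding vq by (rule oint_deriv[OF wf_cont[OF aq]])

lemma Psi_deriv: "((\<lambda>z. oint (\<lambda>x. vfun pp x + vfun qp x + vfun pm x + vfun qm x) 0 z) has_real_derivative W x) (at x)"
  unfolding vsum by (rule oint_deriv[OF W_cont])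

lemma BAE_iff: "BAE m n q pp qp pm qm \<kappa> \<xi> \<longleftrightarrow> (\<forall>j\<in>{1..m}. G \<kappa> \<xi> j = 0)"
  unfolding BAE_def G_def cc_def vq
  using vfun_eq app aqp apm aqm by (simp add: W_def algebra_simps)

lemma chain_plus:
  assumes "\<And>x. (F has_real_derivative F' x) (at x)"
  shows "((\<lambda>t. F ((\<xi>(j:=t)) a + (\<xi>(j:=t)) b)) has_real_derivative F' (\<xi> a + \<xi> b) * (dl a j + dl b j)) (at (\<xi> j))"
proof -
  have d1: "((\<lambda>t. (\<xi>(j:=t)) a + (\<xi>(j:=t)) b) has_real_derivative dl a j + dl b j) (at (\<xi> j))"
    by (intro DERIV_add upd_deriv)
  have "((\<lambda>t. F ((\<xi>(j:=t)) a + (\<xi>(j:=t)) b)) has_real_derivative F' ((\<xi>(j:=\<xi> j)) a + (\<xi>(j:=\<xi> j)) b) * (dl a j + dl b j)) (at (\<xi> j))"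
    by (rule DERIV_chain2[OF assms d1])
  then show ?thesis by simp
qed

lemma chain_minus:
  assumes "\<And>x. (F has_real_derivative F' x) (at x)"
  shows "((\<lambda>t. F ((\<xi>(j:=t)) a - (\<xi>(j:=t)) b)) has_real_derivative F' (\<xi> a - \<xi> b) * (dl a j - dl b j)) (at (\<xi> j))"
proof -
  have d1: "((\<lambda>t. (\<xi>(j:=t)) a - (\<xi>(j:=t)) b) has_real_derivative dl a j - dl b j) (at (\<xi> j))"
    by (intro DERIV_diff upd_deriv)
  have "((\<lambda>t. F ((\<xi>(j:=t)) a - (\<xi>(j:=t)) b)) has_real_derivative F' ((\<xi>(j:=\<xi> j)) a - (\<xi>(j:=\<xi> j)) b) * (dl a j - dl b j)) (at (\<xi> j))"
    by (rule DERIV_chain2[OF assms d1])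
  then show ?thesis by simp
qed

lemma chain_one:
  assumes "\<And>x. (F has_real_derivative F' x) (at x)"
  shows "((\<lambda>t. F ((\<xi>(j:=t)) a)) has_real_derivative F' (\<xi> a) * dl a j) (at (\<xi> j))"
proof -
  have "((\<lambda>t. F ((\<xi>(j:=t)) a)) has_real_derivative F' ((\<xi>(j:=\<xi> j)) a) * dl a j) (at (\<xi> j))"
    by (rule DERIV_chain2[OF assms upd_deriv])
  then show ?thesis by simp
qed

lemma V_deriv:
  "((\<lambda>t. V \<kappa> (\<xi>(j:=t))) has_real_derivative
     (\<Sum>a=1..m. \<Sum>b=Suc a..m. wf q (\<xi> a + \<xi> b) * (dl a j + dl b j) + wf q (\<xi> a - \<xi> b) * (dl a j - dl b j))
   + (\<Sum>a=1..m. real n * (2 * \<xi> a) * dl a j - 2 * pi * cc \<kappa> a * dl a j + W (\<xi> a) * dl a j)) (at (\<xi> j))"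
  unfolding Vfun_def
proof (intro DERIV_add DERIV_sum DERIV_diff)
  fix a b
  show "((\<lambda>t. oint (vfun q) 0 ((\<xi>(j := t)) a + (\<xi>(j := t)) b)) has_real_derivative wf q (\<xi> a + \<xi> b) * (dl a j + dl b j)) (at (\<xi> j))"
    by (rule chain_plus[OF Phi_deriv])
  show "((\<lambda>t. oint (vfun q) 0 ((\<xi>(j := t)) a - (\<xi>(j := t)) b)) has_real_derivative wf q (\<xi> a - \<xi> b) * (dl a j - dl b j)) (at (\<xi> j))"
    by (rule chain_minus[OF Phi_deriv])
  show "((\<lambda>t. oint (\<lambda>x. vfun pp x + vfun qp x + vfun pm x + vfun qm x) 0 ((\<xi>(j := t)) a)) has_real_derivative W (\<xi> a) * dl a j) (at (\<xi> j))"
    by (rule chain_one[OF Psi_deriv])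
  have sq: "\<And>x. ((\<lambda>s. real n * s\<^sup>2) has_real_derivative real n * (2 * x)) (at x)"
    by (auto intro!: derivative_eq_intros)
  show "((\<lambda>t. real n * ((\<xi>(j := t)) a)\<^sup>2) has_real_derivative real n * (2 * \<xi> a) * dl a j) (at (\<xi> j))"
    using chain_one[OF sq, of \<xi> j a] .
  have li: "\<And>x. ((\<lambda>s. 2 * pi * cc \<kappa> a * s) has_real_derivative 2 * pi * cc \<kappa> a) (at x)"
    by (auto intro!: derivative_eq_intros)
  show "((\<lambda>t. 2 * pi * (real m + 1 - real a + real (\<kappa> a)) * (\<xi>(j := t)) a) has_real_derivative 2 * pi * cc \<kappa> a * dl a j) (at (\<xi> j))"
    using chain_one[OF li, of \<xi> j a] by (simp add: cc_def)
qed

end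


context ctx begin

lemma L1:
  fixes x d :: "nat \<Rightarrow> real"
  shows "(\<Sum>a=1..m. \<Sum>b=Suc a..m. wf q (x a + x b) * (d a + d b) + wf q (x a - x b) * (d a - d b))
       = (\<Sum>a=1..m. d a * (\<Sum>k\<in>{1..m} - {a}. wf q (x a + x k) + wf q (x a - x k)))"
proof -
  have "(\<Sum>a=1..m. d a * (\<Sum>k\<in>{1..m} - {a}. wf q (x a + x k) + wf q (x a - x k)))
     = (\<Sum>a=1..m. \<Sum>k\<in>{1..m} - {a}. d a * (wf q (x a + x k) + wf q (x a - x k)))"
    by (simp add: sum_distrib_left)
  also have "\<dots> = (\<Sum>a=1..m. \<Sum>b=Suc a..m. d a * (wf q (x a + x b) + wf q (x a - x b)) + d b * (wf q (x b + x a) + wf q (x b - x a)))"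
    by (rule pair_sum)
  also have "\<dots> = (\<Sum>a=1..m. \<Sum>b=Suc a..m. wf q (x a + x b) * (d a + d b) + wf q (x a - x b) * (d a - d b))"
  proof (intro sum.cong refl)
    fix a b
    have "wf q (x b - x a) = - wf q (x a - x b)" using wf_odd[of q "x a - x b"] by simp
    then show "d a * (wf q (x a + x b) + wf q (x a - x b)) + d b * (wf q (x b + x a) + wf q (x b - x a))
      = wf q (x a + x b) * (d a + d b) + wf q (x a - x b) * (d a - d b)"
      by (simp add: add.commute algebra_simps)
  qed
  finally show ?thesis by simp
qed

lemma pd_eq: "j \<in> {1..m} \<Longrightarrow> pd (V \<kappa>) \<xi> j = G \<kappa> \<xi> j"
proof -
  assume j: "j \<in> {1..m}"
  have "pd (V \<kappa>) \<xi> j = (\<Sum>a=1..m. \<Sum>b=Suc a..m. wf q (\<xi> a + \<xi> b) * (dl a j + dl b j) + wf q (\<xi> a - \<xi> b) * (dl a j - dl b j))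
   + (\<Sum>a=1..m. real n * (2 * \<xi> a) * dl a j - 2 * pi * cc \<kappa> a * dl a j + W (\<xi> a) * dl a j)"
    unfolding pd_def by (rule DERIV_imp_deriv[OF V_deriv])
  also have "(\<Sum>a=1..m. \<Sum>b=Suc a..m. wf q (\<xi> a + \<xi> b) * (dl a j + dl b j) + wf q (\<xi> a - \<xi> b) * (dl a j - dl b j))
     = (\<Sum>k\<in>{1..m} - {j}. wf q (\<xi> j + \<xi> k) + wf q (\<xi> j - \<xi> k))"
    unfolding L1 using j by (simp add: sum_dl')
  also have "(\<Sum>a=1..m. real n * (2 * \<xi> a) * dl a j - 2 * pi * cc \<kappa> a * dl a j + W (\<xi> a) * dl a j)
     = (\<Sum>a=1..m. (real n * (2 * \<xi> a) - 2 * pi * cc \<kappa> a + W (\<xi> a)) * dl a j)"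
    by (simp add: algebra_simps)
  also have "\<dots> = real n * (2 * \<xi> j) - 2 * pi * cc \<kappa> j + W (\<xi> j)"
    using j by (simp add: sum_dl)
  finally show ?thesis by (simp add: G_def algebra_simps)
qed

lemma G_deriv: "((\<lambda>t. G \<kappa> (\<xi>(j:=t)) k) has_real_derivative H \<xi> j k) (at (\<xi> j))"
proof -
  have "((\<lambda>t. G \<kappa> (\<xi>(j:=t)) k) has_real_derivative
     (2 * real n * dl k j + W' (\<xi> k) * dl k j
     + (\<Sum>l\<in>{1..m} - {k}. PK q (\<xi> k + \<xi> l) * (dl k j + dl l j) + PK q (\<xi> k - \<xi> l) * (dl k j - dl l j))) - 0) (at (\<xi> j))"
    unfolding G_def
  proof (intro DERIV_add DERIV_diff DERIV_sum DERIV_const)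
    show "((\<lambda>t. 2 * real n * (\<xi>(j := t)) k) has_real_derivative 2 * real n * dl k j) (at (\<xi> j))"
      by (intro DERIV_cmult upd_deriv)
    show "((\<lambda>t. W ((\<xi>(j := t)) k)) has_real_derivative W' (\<xi> k) * dl k j) (at (\<xi> j))"
      by (rule chain_one[OF W_deriv])
    fix l
    show "((\<lambda>t. wf q ((\<xi>(j := t)) k + (\<xi>(j := t)) l)) has_real_derivative PK q (\<xi> k + \<xi> l) * (dl k j + dl l j)) (at (\<xi> j))"
      by (rule chain_plus[OF wf_deriv[OF aq]])
    show "((\<lambda>t. wf q ((\<xi>(j := t)) k - (\<xi>(j := t)) l)) has_real_derivative PK q (\<xi> k - \<xi> l) * (dl k j - dl l j)) (at (\<xi> j))"
      by (rule chain_minus[OF wf_deriv[OF aq]])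
  qed
  then show ?thesis by (simp add: H_def)
qed

lemma hess_eq: "j \<in> {1..m} \<Longrightarrow> k \<in> {1..m} \<Longrightarrow> hess (V \<kappa>) \<xi> j k = H \<xi> j k"
proof -
  assume j: "j \<in> {1..m}" and k: "k \<in> {1..m}"
  have e: "(\<lambda>t. pd (V \<kappa>) (\<xi>(j:=t)) k) = (\<lambda>t. G \<kappa> (\<xi>(j:=t)) k)" using pd_eq[OF k] by simp
  show ?thesis
    unfolding hess_def pd_def[of "\<lambda>\<eta>. pd (V \<kappa>) \<eta> k"] e
    by (rule DERIV_imp_deriv[OF G_deriv])
qed

lemma wf_ci[continuous_intros]: "continuous_on S f \<Longrightarrow> continuous_on S (\<lambda>x. wf q (f x))"
  using continuous_on_compose2[OF wf_cont[OF aq] _ subset_UNIV] by blast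
lemma PK_ci[continuous_intros]: "continuous_on S f \<Longrightarrow> continuous_on S (\<lambda>x. PK q (f x))"
  using continuous_on_compose2[OF PK_cont[OF aq] _ subset_UNIV] by blast
lemma W_ci[continuous_intros]: "continuous_on S f \<Longrightarrow> continuous_on S (\<lambda>x. W (f x))"
  using continuous_on_compose2[OF W_cont _ subset_UNIV] by blast
lemma W'_cont: "continuous_on UNIV W'"
  unfolding W'_def[abs_def] using PK_cont app aqp apm aqm by (intro continuous_intros) auto
lemma W'_ci[continuous_intros]: "continuous_on S f \<Longrightarrow> continuous_on S (\<lambda>x. W' (f x))"
  using continuous_on_compose2[OF W'_cont _ subset_UNIV] by blast

lemma Phi_cont: "continuous_on UNIV (\<lambda>z. oint (vfun q) 0 z)"
  using Phi_deriv by (meson DERIV_isCont continuous_at_imp_continuous_on)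
lemma Phi_ci[continuous_intros]: "continuous_on S f \<Longrightarrow> continuous_on S (\<lambda>x. oint (vfun q) 0 (f x))"
  using continuous_on_compose2[OF Phi_cont _ subset_UNIV] by blast
lemma Psi_cont: "continuous_on UNIV (\<lambda>z. oint (\<lambda>x. vfun pp x + vfun qp x + vfun pm x + vfun qm x) 0 z)"
  using Psi_deriv by (meson DERIV_isCont continuous_at_imp_continuous_on)
lemma Psi_ci[continuous_intros]: "continuous_on S f \<Longrightarrow> continuous_on S (\<lambda>x. oint (\<lambda>x. vfun pp x + vfun qp x + vfun pm x + vfun qm x) 0 (f x))"
  using continuous_on_compose2[OF Psi_cont _ subset_UNIV] by blast

lemma G_cont: "continuous_on S (\<lambda>\<xi>. G \<kappa> \<xi> j)"
  unfolding G_def by (intro continuous_intros)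
lemma H_cont: "continuous_on S (\<lambda>\<xi>. H \<xi> j k)"
  unfolding H_def by (intro continuous_intros)
lemma V_cont: "continuous_on S (V \<kappa>)"
  unfolding Vfun_def by (intro continuous_intros)

end


lemma mono_from_deriv:
  fixes f f' :: "real \<Rightarrow> real"
  assumes d: "\<And>x. (f has_real_derivative f' x) (at x)" and nn: "\<And>x. 0 \<le> f' x" and xy: "x \<le> y"
  shows "f x \<le> f y"
proof (cases "x = y")
  case False
  then have "x < y" using xy by simp
  then obtain z where "f y - f x = (y - x) * f' z" using MVT2[of x y f f'] d by blast
  moreover have "0 \<le> (y - x) * f' z" using nn[of z] xy by simp
  ultimately show ?thesis by simp
qed simp

context ctx begin

definition T :: "(nat \<Rightarrow> nat) \<Rightarrow> nat \<Rightarrow> real \<Rightarrow> real" where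
  "T \<kappa> a s = real n * s\<^sup>2 - 2 * pi * (real m + 1 - real a + real (\<kappa> a)) * s
     + oint (\<lambda>x. vfun pp x + vfun qp x + vfun pm x + vfun qm x) 0 s"
definition T' :: "(nat \<Rightarrow> nat) \<Rightarrow> nat \<Rightarrow> real \<Rightarrow> real" where
  "T' \<kappa> a s = real n * (2 * s) - 2 * pi * cc \<kappa> a + W s"
definition P1 :: "(nat \<Rightarrow> real) \<Rightarrow> real" where
  "P1 \<xi> = (\<Sum>a=1..m. \<Sum>b=Suc a..m. oint (vfun q) 0 (\<xi> a + \<xi> b) + oint (vfun q) 0 (\<xi> a - \<xi> b))"

lemma V_split: "V \<kappa> \<xi> = P1 \<xi> + (\<Sum>a=1..m. T \<kappa> a (\<xi> a))"
  unfolding Vfun_def P1_def T_def by simp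

lemma T_deriv: "(T \<kappa> a has_real_derivative T' \<kappa> a s) (at s)"
proof -
  have sq: "((\<lambda>s. real n * s\<^sup>2) has_real_derivative real n * (2 * s)) (at s)"
    by (auto intro!: derivative_eq_intros)
  have li: "((\<lambda>s. 2 * pi * (real m + 1 - real a + real (\<kappa> a)) * s) has_real_derivative 2 * pi * (real m + 1 - real a + real (\<kappa> a))) (at s)"
    by (auto intro!: derivative_eq_intros)
  have "(T \<kappa> a has_real_derivative real n * (2 * s) - 2 * pi * (real m + 1 - real a + real (\<kappa> a)) + W s) (at s)"
    unfolding T_def[abs_def] by (rule DERIV_add[OF DERIV_diff[OF sq li] Psi_deriv])
  then show ?thesis by (simp add: T'_def cc_def)
qed

lemma T'_strict: "x < y \<Longrightarrow> T' \<kappa> a x < T' \<kappa> a y"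
  unfolding T'_def using W_strict[of x y]
  by (smt (verit, best) mult_left_mono of_nat_0_le_iff)

lemma T'_mono: "x \<le> y \<Longrightarrow> T' \<kappa> a x \<le> T' \<kappa> a y"
  using T'_strict by (cases "x = y") (auto simp: less_eq_real_def)

lemma wfq_mono: "x \<le> y \<Longrightarrow> wf q x \<le> wf q y" using wf_mono[OF aq] .
lemma wfq_strict: "x < y \<Longrightarrow> wf q x < wf q y" using wf_strict[OF aq] .

lemma Phi_tangent: "oint (vfun q) 0 x + wf q x * (y - x) \<le> oint (vfun q) 0 y"
proof (rule tangent_ineq[of "\<lambda>z. oint (vfun q) 0 z" "wf q"])
  show "\<And>x. ((\<lambda>z. oint (vfun q) 0 z) has_real_derivative wf q x) (at x)" by (rule Phi_deriv)
  show "\<And>x y. x \<le> y \<Longrightarrow> wf q x \<le> wf q y" by (rule wfq_mono)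
qed

lemma Phi_convex: "0 < t \<Longrightarrow> t < 1 \<Longrightarrow> oint (vfun q) 0 ((1 - t) * x + t * y) \<le> (1 - t) * oint (vfun q) 0 x + t * oint (vfun q) 0 y"
proof (rule convex_1d[of "\<lambda>z. oint (vfun q) 0 z" "wf q"])
  show "\<And>x. ((\<lambda>z. oint (vfun q) 0 z) has_real_derivative wf q x) (at x)" by (rule Phi_deriv)
  show "\<And>x y. x < y \<Longrightarrow> wf q x < wf q y" by (rule wfq_strict)
qed

lemma T_tangent: "T \<kappa> a x + T' \<kappa> a x * (y - x) \<le> T \<kappa> a y"
proof (rule tangent_ineq[of "T \<kappa> a" "T' \<kappa> a"])
  show "\<And>x. (T \<kappa> a has_real_derivative T' \<kappa> a x) (at x)" by (rule T_deriv)
  show "\<And>x y. x \<le> y \<Longrightarrow> T' \<kappa> a x \<le> T' \<kappa> a y" by (rule T'_mono)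
qed

lemma T_convex: "0 < t \<Longrightarrow> t < 1 \<Longrightarrow> T \<kappa> a ((1 - t) * x + t * y) \<le> (1 - t) * T \<kappa> a x + t * T \<kappa> a y"
proof (rule convex_1d[of "T \<kappa> a" "T' \<kappa> a"])
  show "\<And>x. (T \<kappa> a has_real_derivative T' \<kappa> a x) (at x)" by (rule T_deriv)
  show "\<And>x y. x < y \<Longrightarrow> T' \<kappa> a x < T' \<kappa> a y" by (rule T'_strict)
qed

lemma T_sconvex: "x \<noteq> y \<Longrightarrow> 0 < t \<Longrightarrow> t < 1 \<Longrightarrow> T \<kappa> a ((1 - t) * x + t * y) < (1 - t) * T \<kappa> a x + t * T \<kappa> a y"
proof (rule strict_convex_1d[of "T \<kappa> a" "T' \<kappa> a"])
  show "\<And>x. (T \<kappa> a has_real_derivative T' \<kappa> a x) (at x)" by (rule T_deriv)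
  show "\<And>x y. x < y \<Longrightarrow> T' \<kappa> a x < T' \<kappa> a y" by (rule T'_strict)
qed

lemma Rm_neq: "x \<in> Rm m \<Longrightarrow> y \<in> Rm m \<Longrightarrow> x \<noteq> y \<Longrightarrow> \<exists>a\<in>{1..m}. x a \<noteq> y a"
proof (rule ccontr)
  assume x: "x \<in> Rm m" and y: "y \<in> Rm m" and xy: "x \<noteq> y" and nc: "\<not> (\<exists>a\<in>{1..m}. x a \<noteq> y a)"
  have "x i = y i" for i
  proof (cases "i \<in> {1..m}")
    case True then show ?thesis using nc by blast
  next
    case False then show ?thesis using x y unfolding Rm_def by simp
  qed
  then have "x = y" by (rule ext)
  then show False using xy by simp
qed

lemma V_sconv: "strictly_convex_Rm m (V \<kappa>)"
  unfolding strictly_convex_Rm_def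
proof (intro ballI allI impI)
  fix x y :: "nat \<Rightarrow> real" and t :: real
  assume x: "x \<in> Rm m" and y: "y \<in> Rm m" and xy: "x \<noteq> y" and t: "0 < t" "t < 1"
  define z where "z = (\<lambda>i. (1 - t) * x i + t * y i)"
  have p: "oint (vfun q) 0 (z a + z b) + oint (vfun q) 0 (z a - z b)
      \<le> (1 - t) * (oint (vfun q) 0 (x a + x b) + oint (vfun q) 0 (x a - x b))
        + t * (oint (vfun q) 0 (y a + y b) + oint (vfun q) 0 (y a - y b))" for a b
  proof -
    have e1: "z a + z b = (1 - t) * (x a + x b) + t * (y a + y b)" "z a - z b = (1 - t) * (x a - x b) + t * (y a - y b)"
      by (simp_all add: z_def algebra_simps)
    have c1: "oint (vfun q) 0 (z a + z b) \<le> (1 - t) * oint (vfun q) 0 (x a + x b) + t * oint (vfun q) 0 (y a + y b)"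
      unfolding e1 by (rule Phi_convex[OF t])
    have c2: "oint (vfun q) 0 (z a - z b) \<le> (1 - t) * oint (vfun q) 0 (x a - x b) + t * oint (vfun q) 0 (y a - y b)"
      unfolding e1 by (rule Phi_convex[OF t])
    show ?thesis using c1 c2 by (simp add: distrib_left)
  qed
  have P1le: "P1 z \<le> (1 - t) * P1 x + t * P1 y"
  proof -
    have "P1 z \<le> (\<Sum>a=1..m. \<Sum>b=Suc a..m. (1 - t) * (oint (vfun q) 0 (x a + x b) + oint (vfun q) 0 (x a - x b))
        + t * (oint (vfun q) 0 (y a + y b) + oint (vfun q) 0 (y a - y b)))"
      unfolding P1_def by (intro sum_mono p)
    also have "\<dots> = (1 - t) * P1 x + t * P1 y"
      by (simp only: P1_def sum_distrib_left sum.distrib[symmetric])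
    finally show ?thesis .
  qed
  obtain a0 where a0: "a0 \<in> {1..m}" "x a0 \<noteq> y a0" using Rm_neq[OF x y xy] by blast
  have Tlt: "(\<Sum>a=1..m. T \<kappa> a (z a)) < (\<Sum>a=1..m. (1 - t) * T \<kappa> a (x a) + t * T \<kappa> a (y a))"
  proof (rule sum_strict_mono_ex1)
    show "\<forall>a\<in>{1..m}. T \<kappa> a (z a) \<le> (1 - t) * T \<kappa> a (x a) + t * T \<kappa> a (y a)"
      unfolding z_def using T_convex[OF t] by blast
    show "\<exists>a\<in>{1..m}. T \<kappa> a (z a) < (1 - t) * T \<kappa> a (x a) + t * T \<kappa> a (y a)"
      using a0 T_sconvex[OF a0(2) t] unfolding z_def by blast
  qed simp
  have "(\<Sum>a=1..m. (1 - t) * T \<kappa> a (x a) + t * T \<kappa> a (y a)) = (1 - t) * (\<Sum>a=1..m. T \<kappa> a (x a)) + t * (\<Sum>a=1..m. T \<kappa> a (y a))"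
    by (simp add: sum.distrib sum_distrib_left)
  moreover have "(1 - t) * (P1 x + (\<Sum>a=1..m. T \<kappa> a (x a))) + t * (P1 y + (\<Sum>a=1..m. T \<kappa> a (y a)))
     = ((1 - t) * P1 x + t * P1 y) + ((1 - t) * (\<Sum>a=1..m. T \<kappa> a (x a)) + t * (\<Sum>a=1..m. T \<kappa> a (y a)))"
    by (simp add: algebra_simps)
  ultimately have "P1 z + (\<Sum>a=1..m. T \<kappa> a (z a)) < (1 - t) * (P1 x + (\<Sum>a=1..m. T \<kappa> a (x a))) + t * (P1 y + (\<Sum>a=1..m. T \<kappa> a (y a)))"
    using P1le Tlt by linarith
  then have "V \<kappa> z < (1 - t) * V \<kappa> x + t * V \<kappa> y"
    unfolding V_split .
  then show "V \<kappa> (\<lambda>i. (1 - t) * x i + t * y i) < (1 - t) * V \<kappa> x + t * V \<kappa> y"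
    unfolding z_def .
qed

lemma G_T': "G \<kappa> \<xi> a = T' \<kappa> a (\<xi> a) + (\<Sum>k\<in>{1..m} - {a}. wf q (\<xi> a + \<xi> k) + wf q (\<xi> a - \<xi> k))"
proof -
  have "real n * (2 * \<xi> a) = 2 * real n * \<xi> a" by simp
  then show ?thesis unfolding G_def T'_def by linarith
qed

lemma Vmin_t1:
  fixes \<xi> \<eta> :: "nat \<Rightarrow> real"
  defines "d \<equiv> (\<lambda>i. \<eta> i - \<xi> i)"
  shows "P1 \<xi> + (\<Sum>a=1..m. \<Sum>b=Suc a..m. wf q (\<xi> a + \<xi> b) * (d a + d b) + wf q (\<xi> a - \<xi> b) * (d a - d b)) \<le> P1 \<eta>"
proof -
  have "(\<Sum>a=1..m. \<Sum>b=Suc a..m. (oint (vfun q) 0 (\<xi> a + \<xi> b) + wf q (\<xi> a + \<xi> b) * ((\<eta> a + \<eta> b) - (\<xi> a + \<xi> b)))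
      + (oint (vfun q) 0 (\<xi> a - \<xi> b) + wf q (\<xi> a - \<xi> b) * ((\<eta> a - \<eta> b) - (\<xi> a - \<xi> b))))
    = (\<Sum>a=1..m. \<Sum>b=Suc a..m. (oint (vfun q) 0 (\<xi> a + \<xi> b) + oint (vfun q) 0 (\<xi> a - \<xi> b))
      + (wf q (\<xi> a + \<xi> b) * (d a + d b) + wf q (\<xi> a - \<xi> b) * (d a - d b)))"
    by (intro sum.cong refl) (simp add: d_def algebra_simps)
  also have "\<dots> = P1 \<xi> + (\<Sum>a=1..m. \<Sum>b=Suc a..m. wf q (\<xi> a + \<xi> b) * (d a + d b) + wf q (\<xi> a - \<xi> b) * (d a - d b))"
    by (simp only: P1_def sum.distrib)
  finally have e: "P1 \<xi> + (\<Sum>a=1..m. \<Sum>b=Suc a..m. wf q (\<xi> a + \<xi> b) * (d a + d b) + wf q (\<xi> a - \<xi> b) * (d a - d b))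
    = (\<Sum>a=1..m. \<Sum>b=Suc a..m. (oint (vfun q) 0 (\<xi> a + \<xi> b) + wf q (\<xi> a + \<xi> b) * ((\<eta> a + \<eta> b) - (\<xi> a + \<xi> b)))
      + (oint (vfun q) 0 (\<xi> a - \<xi> b) + wf q (\<xi> a - \<xi> b) * ((\<eta> a - \<eta> b) - (\<xi> a - \<xi> b))))"
    by (rule sym)
  have "(\<Sum>a=1..m. \<Sum>b=Suc a..m. (oint (vfun q) 0 (\<xi> a + \<xi> b) + wf q (\<xi> a + \<xi> b) * ((\<eta> a + \<eta> b) - (\<xi> a + \<xi> b)))
      + (oint (vfun q) 0 (\<xi> a - \<xi> b) + wf q (\<xi> a - \<xi> b) * ((\<eta> a - \<eta> b) - (\<xi> a - \<xi> b)))) \<le> P1 \<eta>"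
    unfolding P1_def
    apply (rule sum_mono, rule sum_mono, rule add_mono)
     apply (rule Phi_tangent)
    apply (rule Phi_tangent)
    done
  then show ?thesis unfolding e .
qed

lemma Vmin_t2:
  fixes \<xi> \<eta> :: "nat \<Rightarrow> real"
  shows "(\<Sum>a=1..m. T \<kappa> a (\<xi> a) + T' \<kappa> a (\<xi> a) * (\<eta> a - \<xi> a)) \<le> (\<Sum>a=1..m. T \<kappa> a (\<eta> a))"
  by (rule sum_mono) (rule T_tangent)

lemma Vmin_z:
  fixes \<xi> d :: "nat \<Rightarrow> real"
  shows "(\<Sum>a=1..m. \<Sum>b=Suc a..m. wf q (\<xi> a + \<xi> b) * (d a + d b) + wf q (\<xi> a - \<xi> b) * (d a - d b))
     + (\<Sum>a=1..m. T' \<kappa> a (\<xi> a) * d a) = (\<Sum>a=1..m. d a * G \<kappa> \<xi> a)"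
proof -
  have "(\<Sum>a=1..m. \<Sum>b=Suc a..m. wf q (\<xi> a + \<xi> b) * (d a + d b) + wf q (\<xi> a - \<xi> b) * (d a - d b))
   + (\<Sum>a=1..m. T' \<kappa> a (\<xi> a) * d a) = (\<Sum>a=1..m. d a * (\<Sum>k\<in>{1..m} - {a}. wf q (\<xi> a + \<xi> k) + wf q (\<xi> a - \<xi> k)))
     + (\<Sum>a=1..m. T' \<kappa> a (\<xi> a) * d a)" by (simp only: L1)
  also have "\<dots> = (\<Sum>a=1..m. d a * (\<Sum>k\<in>{1..m} - {a}. wf q (\<xi> a + \<xi> k) + wf q (\<xi> a - \<xi> k))
     + T' \<kappa> a (\<xi> a) * d a)" by (simp only: sum.distrib)
  also have "\<dots> = (\<Sum>a=1..m. d a * G \<kappa> \<xi> a)"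
  proof (rule sum.cong[OF refl])
    fix a
    show "d a * (\<Sum>k\<in>{1..m} - {a}. wf q (\<xi> a + \<xi> k) + wf q (\<xi> a - \<xi> k)) + T' \<kappa> a (\<xi> a) * d a = d a * G \<kappa> \<xi> a"
      unfolding G_T' by (simp add: distrib_left)
  qed
  finally show ?thesis .
qed

lemma V_min: assumes "\<forall>a\<in>{1..m}. G \<kappa> \<xi> a = 0" shows "V \<kappa> \<xi> \<le> V \<kappa> \<eta>"
proof -
  note t1 = Vmin_t1[of \<xi> \<eta>]
  note t2 = Vmin_t2[of \<kappa> \<xi> \<eta>]
  have s0: "(\<Sum>a=1..m. (\<eta> a - \<xi> a) * G \<kappa> \<xi> a) = 0" using assms by simp
  note z = Vmin_z[of \<xi> "\<lambda>i. \<eta> i - \<xi> i" \<kappa>, unfolded s0]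
  have e: "(\<Sum>a=1..m. T \<kappa> a (\<xi> a) + T' \<kappa> a (\<xi> a) * (\<eta> a - \<xi> a)) = (\<Sum>a=1..m. T \<kappa> a (\<xi> a)) + (\<Sum>a=1..m. T' \<kappa> a (\<xi> a) * (\<eta> a - \<xi> a))"
    by (rule sum.distrib)
  show ?thesis unfolding V_split using t1 t2 z e by linarith
qed

end


lemma oint_00[simp]: "oint f 0 0 = 0" by (simp add: oint_def)

context ctx begin

lemma Phi_nonneg: "0 \<le> oint (vfun q) 0 z"
  using Phi_tangent[of 0 z] by simp

lemma Psi_lb: "c0 / 2 * s\<^sup>2 \<le> oint (\<lambda>x. vfun pp x + vfun qp x + vfun pm x + vfun qm x) 0 s"
proof -
  define E where "E = (\<lambda>s. oint (\<lambda>x. vfun pp x + vfun qp x + vfun pm x + vfun qm x) 0 s - c0 / 2 * s\<^sup>2)"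
  define E' where "E' = (\<lambda>s. W s - c0 * s)"
  have dE: "(E has_real_derivative E' x) (at x)" for x
  proof -
    have sq: "((\<lambda>s. c0 / 2 * s\<^sup>2) has_real_derivative c0 / 2 * (2 * x)) (at x)"
      by (auto intro!: derivative_eq_intros)
    have "(E has_real_derivative W x - c0 / 2 * (2 * x)) (at x)"
      unfolding E_def by (rule DERIV_diff[OF Psi_deriv sq])
    then show ?thesis unfolding E'_def by simp
  qed
  have dE': "(E' has_real_derivative W' x - c0) (at x)" for x
  proof -
    have "(E' has_real_derivative W' x - c0 * 1) (at x)"
      unfolding E'_def by (intro DERIV_diff W_deriv DERIV_cmult DERIV_ident)
    then show ?thesis by simp
  qed
  have monoE': "E' x \<le> E' y" if "x \<le> y" for x y
    by (rule mono_from_deriv[OF dE' _ that]) (use W'_lb in simp)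
  have "E 0 + E' 0 * (s - 0) \<le> E s"
    by (rule tangent_ineq[of E E', OF dE monoE'])
  moreover have "E 0 = 0" "E' 0 = 0" by (simp_all add: E_def E'_def W_def)
  ultimately show ?thesis unfolding E_def by simp
qed

definition KK :: real where "KK = 2 * pi * (real m + real n)"

lemma cc_bounds: "\<kappa> \<in> Lambda m n \<Longrightarrow> a \<in> {1..m} \<Longrightarrow> 0 \<le> cc \<kappa> a \<and> cc \<kappa> a \<le> real m + real n"
proof -
  assume k: "\<kappa> \<in> Lambda m n" and a: "a \<in> {1..m}"
  have "\<kappa> a \<le> n" using k a unfolding Lambda_def by auto
  then have "real (\<kappa> a) \<le> real n" "1 \<le> real a" "real a \<le> real m" using a by auto
  then show ?thesis unfolding cc_def by linarith
qed

lemma quad_lb: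
  fixes s K :: real assumes c: "0 < c" shows "c / 4 * s\<^sup>2 - K\<^sup>2 / c \<le> c / 2 * s\<^sup>2 - K * \<bar>s\<bar>"
proof -
  have "0 \<le> (c * \<bar>s\<bar> / 2 - K)\<^sup>2 / c" using c by simp
  also have "(c * \<bar>s\<bar> / 2 - K)\<^sup>2 / c = c / 4 * s\<^sup>2 - K * \<bar>s\<bar> + K\<^sup>2 / c"
    using c by (simp add: power2_eq_square field_simps)
  finally show ?thesis by simp
qed

lemma T_lb:
  assumes k: "\<kappa> \<in> Lambda m n" and a: "a \<in> {1..m}"
  shows "c0 / 4 * s\<^sup>2 - KK\<^sup>2 / c0 \<le> T \<kappa> a s"
proof -
  have cb: "0 \<le> cc \<kappa> a" "cc \<kappa> a \<le> real m + real n" using cc_bounds[OF k a] by auto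
  have "2 * pi * cc \<kappa> a * s \<le> KK * \<bar>s\<bar>"
  proof -
    have "2 * pi * cc \<kappa> a * s \<le> 2 * pi * cc \<kappa> a * \<bar>s\<bar>" using cb by (intro mult_left_mono) auto
    also have "\<dots> \<le> KK * \<bar>s\<bar>" unfolding KK_def using cb by (intro mult_right_mono) auto
    finally show ?thesis .
  qed
  moreover have "0 \<le> real n * s\<^sup>2" by simp
  moreover note Psi_lb[of s] quad_lb[OF c0_pos, of s KK]
  moreover have "T \<kappa> a s = real n * s\<^sup>2 - 2 * pi * cc \<kappa> a * s + oint (\<lambda>x. vfun pp x + vfun qp x + vfun pm x + vfun qm x) 0 s"
    by (simp add: T_def cc_def)
  ultimately show ?thesis by linarith
qed

lemma V_lb:
  assumes k: "\<kappa> \<in> Lambda m n"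
  shows "c0 / 4 * (\<Sum>a=1..m. (\<xi> a)\<^sup>2) - real m * (KK\<^sup>2 / c0) \<le> V \<kappa> \<xi>"
proof -
  have "0 \<le> P1 \<xi>" unfolding P1_def by (intro sum_nonneg add_nonneg_nonneg Phi_nonneg)
  moreover have "(\<Sum>a=1..m. c0 / 4 * (\<xi> a)\<^sup>2 - KK\<^sup>2 / c0) \<le> (\<Sum>a=1..m. T \<kappa> a (\<xi> a))"
    by (rule sum_mono) (rule T_lb[OF k], simp)
  moreover have "(\<Sum>a=1..m. c0 / 4 * (\<xi> a)\<^sup>2 - KK\<^sup>2 / c0) = c0 / 4 * (\<Sum>a=1..m. (\<xi> a)\<^sup>2) - real m * (KK\<^sup>2 / c0)"
    by (simp add: sum_subtractf sum_distrib_left)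
  ultimately show ?thesis unfolding V_split by linarith
qed

lemma norm_sq: "(eucl_norm m \<xi>)\<^sup>2 = (\<Sum>a=1..m. (\<xi> a)\<^sup>2)"
  unfolding eucl_norm_def by (simp add: sum_nonneg)

lemma norm_ge: "i \<in> {1..m} \<Longrightarrow> \<bar>\<xi> i\<bar> \<le> eucl_norm m \<xi>"
proof -
  assume i: "i \<in> {1..m}"
  have "(\<xi> i)\<^sup>2 \<le> (\<Sum>a=1..m. (\<xi> a)\<^sup>2)"
    by (rule member_le_sum[OF i]) auto
  then have "sqrt ((\<xi> i)\<^sup>2) \<le> eucl_norm m \<xi>" unfolding eucl_norm_def by (rule real_sqrt_le_mono)
  then show ?thesis by simp
qed

lemma V_radial: assumes k: "\<kappa> \<in> Lambda m n" shows "radially_unbounded_Rm m (V \<kappa>)"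
  unfolding radially_unbounded_Rm_def
proof
  fix B :: real
  define R where "R = sqrt (4 * (\<bar>B\<bar> + real m * (KK\<^sup>2 / c0)) / c0)"
  have arg0: "0 \<le> 4 * (\<bar>B\<bar> + real m * (KK\<^sup>2 / c0)) / c0"
  proof -
    have "0 \<le> KK\<^sup>2 / c0" using c0_pos by simp
    then have a1: "0 \<le> real m * (KK\<^sup>2 / c0)" by (intro mult_nonneg_nonneg) auto
    have h: "0 \<le> 4 * (\<bar>B\<bar> + real m * (KK\<^sup>2 / c0))" by (rule mult_nonneg_nonneg[OF _ add_nonneg_nonneg[OF abs_ge_zero a1]]) simp
    show ?thesis by (rule divide_nonneg_pos[OF h c0_pos])
  qed
  have Rsq: "R\<^sup>2 = 4 * (\<bar>B\<bar> + real m * (KK\<^sup>2 / c0)) / c0"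
    unfolding R_def by (rule real_sqrt_pow2[OF arg0])
  have "V \<kappa> \<xi> \<ge> B" if "\<xi> \<in> Rm m" "eucl_norm m \<xi> \<ge> R" for \<xi>
  proof -
    have R0: "0 \<le> R" unfolding R_def by (rule real_sqrt_ge_zero[OF arg0])
    have "R\<^sup>2 \<le> (eucl_norm m \<xi>)\<^sup>2" using that(2) R0 by (intro power_mono) auto
    then have "4 * (\<bar>B\<bar> + real m * (KK\<^sup>2 / c0)) / c0 \<le> (\<Sum>a=1..m. (\<xi> a)\<^sup>2)" unfolding Rsq norm_sq .
    then have "c0 / 4 * (4 * (\<bar>B\<bar> + real m * (KK\<^sup>2 / c0)) / c0) \<le> c0 / 4 * (\<Sum>a=1..m. (\<xi> a)\<^sup>2)"
      using c0_pos by (intro mult_left_mono) auto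
    moreover have "c0 / 4 * (4 * (\<bar>B\<bar> + real m * (KK\<^sup>2 / c0)) / c0) = \<bar>B\<bar> + real m * (KK\<^sup>2 / c0)"
      using c0_pos by simp
    ultimately show ?thesis using V_lb[OF k, of \<xi>] by linarith
  qed
  then show "\<exists>R. \<forall>\<xi>\<in>Rm m. R \<le> eucl_norm m \<xi> \<longrightarrow> B \<le> V \<kappa> \<xi>" by blast
qed

lemma V_deriv_G: "j \<in> {1..m} \<Longrightarrow> ((\<lambda>t. V \<kappa> (\<xi>(j:=t))) has_real_derivative G \<kappa> \<xi> j) (at (\<xi> j))"
proof -
  assume j: "j \<in> {1..m}"
  obtain D where d: "((\<lambda>t. V \<kappa> (\<xi>(j:=t))) has_real_derivative D) (at (\<xi> j))" using V_deriv by blast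
  have "D = G \<kappa> \<xi> j" using DERIV_imp_deriv[OF d] pd_eq[OF j, of \<kappa> \<xi>] unfolding pd_def by simp
  then show ?thesis using d by simp
qed

lemma zero_Rm: "(\<lambda>_. 0) \<in> Rm m" by (simp add: Rm_def)

lemma V_exists_min:
  assumes k: "\<kappa> \<in> Lambda m n"
  shows "\<exists>\<xi>0\<in>Rm m. \<forall>\<eta>\<in>Rm m. V \<kappa> \<xi>0 \<le> V \<kappa> \<eta>"
proof -
  obtain R where R: "\<forall>\<xi>\<in>Rm m. R \<le> eucl_norm m \<xi> \<longrightarrow> V \<kappa> (\<lambda>_. 0) + 1 \<le> V \<kappa> \<xi>"
    using V_radial[OF k] unfolding radially_unbounded_Rm_def by blast
  define R' where "R' = max R 0"
  define S where "S = (\<lambda>i::nat. if i \<in> {1..m} then {-R'..R'} else {0::real})"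
  define K where "K = Pi UNIV S"
  have cK: "compact K" unfolding K_def S_def by (rule compact_box) auto
  have z: "(\<lambda>_. 0) \<in> K" unfolding K_def S_def R'_def by auto
  have KR: "K \<subseteq> Rm m"
  proof
    fix x assume "x \<in> K"
    then have xs: "x j \<in> S j" for j unfolding K_def by auto
    have "x j = 0" if j: "j \<notin> {1..m}" for j
    proof -
      have "S j = {0}" using j unfolding S_def by auto
      then show ?thesis using xs[of j] by simp
    qed
    then show "x \<in> Rm m" unfolding Rm_def by blast
  qed
  obtain \<xi>0 where x0: "\<xi>0 \<in> K" "\<forall>y\<in>K. V \<kappa> \<xi>0 \<le> V \<kappa> y"
    using continuous_attains_inf[OF cK _ V_cont, of \<kappa>] z by blast
  have "V \<kappa> \<xi>0 \<le> V \<kappa> \<eta>" if e: "\<eta> \<in> Rm m" for \<eta>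
  proof (cases "\<eta> \<in> K")
    case True then show ?thesis using x0 by blast
  next
    case False
    then obtain i where i: "\<eta> i \<notin> S i" unfolding K_def by auto
    have im: "i \<in> {1..m}" using i e unfolding S_def Rm_def by (cases "i \<in> {1..m}") auto
    then have "R' < \<bar>\<eta> i\<bar>" using i unfolding S_def by auto
    then have "R \<le> eucl_norm m \<eta>" using norm_ge[OF im, of \<eta>] unfolding R'_def by linarith
    then have "V \<kappa> (\<lambda>_. 0) + 1 \<le> V \<kappa> \<eta>" using R e by blast
    moreover have "V \<kappa> \<xi>0 \<le> V \<kappa> (\<lambda>_. 0)" using x0 z by blast
    ultimately show ?thesis by linarith
  qed
  then show ?thesis using x0(1) KR by blast
qed

lemma BAE_exists:
  assumes k: "\<kappa> \<in> Lambda m n"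
  shows "\<exists>\<xi>\<in>Rm m. \<forall>j\<in>{1..m}. G \<kappa> \<xi> j = 0"
proof -
  obtain \<xi>0 where x0: "\<xi>0 \<in> Rm m" "\<forall>\<eta>\<in>Rm m. V \<kappa> \<xi>0 \<le> V \<kappa> \<eta>" using V_exists_min[OF k] by blast
  have "G \<kappa> \<xi>0 j = 0" if j: "j \<in> {1..m}" for j
  proof (rule DERIV_local_min[OF V_deriv_G[OF j]])
    show "(0::real) < 1" by simp
    show "\<forall>y. \<bar>\<xi>0 j - y\<bar> < 1 \<longrightarrow> V \<kappa> (\<xi>0(j := \<xi>0 j)) \<le> V \<kappa> (\<xi>0(j := y))"
    proof (intro allI impI)
      fix y
      have "\<xi>0(j := y) \<in> Rm m" using x0(1) j unfolding Rm_def by auto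
      then show "V \<kappa> (\<xi>0(j := \<xi>0 j)) \<le> V \<kappa> (\<xi>0(j := y))" using x0(2) by simp
    qed
  qed
  then show ?thesis using x0(1) by blast
qed

lemma BAE_unique:
  assumes x: "\<forall>j\<in>{1..m}. G \<kappa> x j = 0" and y: "\<forall>j\<in>{1..m}. G \<kappa> y j = 0"
    and xR: "x \<in> Rm m" and yR: "y \<in> Rm m"
  shows "x = y"
proof (rule ccontr)
  assume xy: "x \<noteq> y"
  have t: "0 < (1/2::real)" "(1/2::real) < 1" by simp_all
  have sc: "\<forall>x\<in>Rm m. \<forall>y\<in>Rm m. \<forall>t::real. x \<noteq> y \<longrightarrow> 0 < t \<longrightarrow> t < 1 \<longrightarrow>
        V \<kappa> (\<lambda>i. (1 - t) * x i + t * y i) < (1 - t) * V \<kappa> x + t * V \<kappa> y"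
    using V_sconv[of \<kappa>] unfolding strictly_convex_Rm_def .
  have lt: "V \<kappa> (\<lambda>i. (1 - 1/2) * x i + 1/2 * y i) < (1 - 1/2) * V \<kappa> x + 1/2 * V \<kappa> y"
    using sc[rule_format, OF xR yR xy t(1) t(2)] .
  have m1: "V \<kappa> x \<le> V \<kappa> (\<lambda>i. (1 - 1/2) * x i + 1/2 * y i)" by (rule V_min[OF x])
  have "V \<kappa> x \<le> V \<kappa> y" by (rule V_min[OF x])
  moreover have "V \<kappa> y \<le> V \<kappa> x" by (rule V_min[OF y])
  ultimately have e: "V \<kappa> y = V \<kappa> x" by linarith
  have e2: "(1 - 1/2) * V \<kappa> x + 1/2 * V \<kappa> y = V \<kappa> x" unfolding e by simp
  have "V \<kappa> (\<lambda>i. (1 - 1/2) * x i + 1/2 * y i) < V \<kappa> x" using lt unfolding e2 .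
  then show False using m1 by simp
qed

end


lemma dl_sym: "dl k j = dl j k" by (simp add: dl_def)

lemma hdl: "k \<in> {1..m} \<Longrightarrow> (\<Sum>j=1..m. h j * dl k j) = h k"
  unfolding dl_sym[of k] by (rule sum_dl) auto

context ctx begin

lemma col:
  assumes k: "k \<in> {1..m}"
  shows "(\<Sum>j=1..m. h j * H \<xi> j k) = 2 * real n * h k + W' (\<xi> k) * h k
     + (\<Sum>l\<in>{1..m} - {k}. PK q (\<xi> k + \<xi> l) * (h k + h l) + PK q (\<xi> k - \<xi> l) * (h k - h l))"
proof -
  have e1: "h j * H \<xi> j k = 2 * real n * (h j * dl k j) + W' (\<xi> k) * (h j * dl k j)
     + (\<Sum>l\<in>{1..m} - {k}. PK q (\<xi> k + \<xi> l) * (h j * dl k j) + PK q (\<xi> k + \<xi> l) * (h j * dl l j)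
        + (PK q (\<xi> k - \<xi> l) * (h j * dl k j) - PK q (\<xi> k - \<xi> l) * (h j * dl l j)))" for j
    unfolding H_def by (simp add: algebra_simps sum_distrib_left)
  have "(\<Sum>j=1..m. h j * H \<xi> j k) = (\<Sum>j=1..m. 2 * real n * (h j * dl k j) + W' (\<xi> k) * (h j * dl k j)
     + (\<Sum>l\<in>{1..m} - {k}. PK q (\<xi> k + \<xi> l) * (h j * dl k j) + PK q (\<xi> k + \<xi> l) * (h j * dl l j)
        + (PK q (\<xi> k - \<xi> l) * (h j * dl k j) - PK q (\<xi> k - \<xi> l) * (h j * dl l j))))"
    by (rule sum.cong[OF refl]) (rule e1)
  also have "\<dots> = 2 * real n * (\<Sum>j=1..m. h j * dl k j) + W' (\<xi> k) * (\<Sum>j=1..m. h j * dl k j)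
     + (\<Sum>j=1..m. \<Sum>l\<in>{1..m} - {k}. PK q (\<xi> k + \<xi> l) * (h j * dl k j) + PK q (\<xi> k + \<xi> l) * (h j * dl l j)
        + (PK q (\<xi> k - \<xi> l) * (h j * dl k j) - PK q (\<xi> k - \<xi> l) * (h j * dl l j)))"
    by (simp only: sum.distrib sum_distrib_left)
  also have "(\<Sum>j=1..m. \<Sum>l\<in>{1..m} - {k}. PK q (\<xi> k + \<xi> l) * (h j * dl k j) + PK q (\<xi> k + \<xi> l) * (h j * dl l j)
        + (PK q (\<xi> k - \<xi> l) * (h j * dl k j) - PK q (\<xi> k - \<xi> l) * (h j * dl l j)))
     = (\<Sum>l\<in>{1..m} - {k}. \<Sum>j=1..m. PK q (\<xi> k + \<xi> l) * (h j * dl k j) + PK q (\<xi> k + \<xi> l) * (h j * dl l j)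
        + (PK q (\<xi> k - \<xi> l) * (h j * dl k j) - PK q (\<xi> k - \<xi> l) * (h j * dl l j)))"
    by (rule sum.swap)
  also have "\<dots> = (\<Sum>l\<in>{1..m} - {k}. PK q (\<xi> k + \<xi> l) * (\<Sum>j=1..m. h j * dl k j) + PK q (\<xi> k + \<xi> l) * (\<Sum>j=1..m. h j * dl l j)
        + (PK q (\<xi> k - \<xi> l) * (\<Sum>j=1..m. h j * dl k j) - PK q (\<xi> k - \<xi> l) * (\<Sum>j=1..m. h j * dl l j)))"
    by (simp only: sum.distrib sum_subtractf sum_distrib_left)
  also have "\<dots> = (\<Sum>l\<in>{1..m} - {k}. PK q (\<xi> k + \<xi> l) * (h k + h l) + PK q (\<xi> k - \<xi> l) * (h k - h l))"
  proof (rule sum.cong[OF refl])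
    fix l assume l: "l \<in> {1..m} - {k}"
    show "PK q (\<xi> k + \<xi> l) * (\<Sum>j=1..m. h j * dl k j) + PK q (\<xi> k + \<xi> l) * (\<Sum>j=1..m. h j * dl l j)
        + (PK q (\<xi> k - \<xi> l) * (\<Sum>j=1..m. h j * dl k j) - PK q (\<xi> k - \<xi> l) * (\<Sum>j=1..m. h j * dl l j))
      = PK q (\<xi> k + \<xi> l) * (h k + h l) + PK q (\<xi> k - \<xi> l) * (h k - h l)"
      using hdl[OF k, where h=h] hdl[where k=l and h=h] l by (simp add: algebra_simps)
  qed
  finally show ?thesis using hdl[OF k, where h=h] by simp
qed

definition gg :: "(nat \<Rightarrow> real) \<Rightarrow> (nat \<Rightarrow> real) \<Rightarrow> nat \<Rightarrow> nat \<Rightarrow> real" where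
  "gg \<xi> h k l = PK q (\<xi> k + \<xi> l) * (h k * (h k + h l)) + PK q (\<xi> k - \<xi> l) * (h k * (h k - h l))"

lemma quad:
  "(\<Sum>j=1..m. h j * (\<Sum>k=1..m. H \<xi> j k * h k))
    = (\<Sum>k=1..m. (2 * real n + W' (\<xi> k)) * (h k)\<^sup>2) + (\<Sum>k=1..m. \<Sum>l\<in>{1..m} - {k}. gg \<xi> h k l)"
proof -
  have "(\<Sum>j=1..m. h j * (\<Sum>k=1..m. H \<xi> j k * h k)) = (\<Sum>j=1..m. \<Sum>k=1..m. h k * (h j * H \<xi> j k))"
    by (simp add: sum_distrib_left mult_ac)
  also have "\<dots> = (\<Sum>k=1..m. \<Sum>j=1..m. h k * (h j * H \<xi> j k))" by (rule sum.swap)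
  also have "\<dots> = (\<Sum>k=1..m. h k * (\<Sum>j=1..m. h j * H \<xi> j k))" by (simp only: sum_distrib_left)
  also have "\<dots> = (\<Sum>k=1..m. (2 * real n + W' (\<xi> k)) * (h k)\<^sup>2 + (\<Sum>l\<in>{1..m} - {k}. gg \<xi> h k l))"
  proof (rule sum.cong[OF refl])
    fix k assume k: "k \<in> {1..m}"
    show "h k * (\<Sum>j=1..m. h j * H \<xi> j k) = (2 * real n + W' (\<xi> k)) * (h k)\<^sup>2 + (\<Sum>l\<in>{1..m} - {k}. gg \<xi> h k l)"
      unfolding col[OF k] gg_def by (simp add: sum_distrib_left algebra_simps power2_eq_square)
  qed
  also have "\<dots> = (\<Sum>k=1..m. (2 * real n + W' (\<xi> k)) * (h k)\<^sup>2) + (\<Sum>k=1..m. \<Sum>l\<in>{1..m} - {k}. gg \<xi> h k l)"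
    by (rule sum.distrib)
  finally show ?thesis .
qed

lemma gg_nonneg: "0 \<le> (\<Sum>k=1..m. \<Sum>l\<in>{1..m} - {k}. gg \<xi> h k l)"
proof -
  have sw: "(\<Sum>k=1..m. \<Sum>l\<in>{1..m} - {k}. gg \<xi> h k l) = (\<Sum>k=1..m. \<Sum>l\<in>{1..m} - {k}. gg \<xi> h l k)"
    by (rule pair_swap)
  have "0 \<le> (\<Sum>k=1..m. \<Sum>l\<in>{1..m} - {k}. gg \<xi> h k l + gg \<xi> h l k)"
  proof (intro sum_nonneg)
    fix k l
    have p1: "PK q (\<xi> l + \<xi> k) = PK q (\<xi> k + \<xi> l)" by (simp add: add.commute)
    have p2: "PK q (\<xi> l - \<xi> k) = PK q (\<xi> k - \<xi> l)" using PK_even[of q "\<xi> k - \<xi> l"] by simp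
    have "gg \<xi> h k l + gg \<xi> h l k = PK q (\<xi> k + \<xi> l) * (h k + h l)\<^sup>2 + PK q (\<xi> k - \<xi> l) * (h k - h l)\<^sup>2"
      unfolding gg_def p1 p2 by (simp add: algebra_simps power2_eq_square)
    moreover have "0 < PK q (\<xi> k + \<xi> l)" "0 < PK q (\<xi> k - \<xi> l)" using PK_bounds(3)[OF aq] by auto
    ultimately show "0 \<le> gg \<xi> h k l + gg \<xi> h l k" by simp
  qed
  also have "\<dots> = 2 * (\<Sum>k=1..m. \<Sum>l\<in>{1..m} - {k}. gg \<xi> h k l)"
    using sw by (simp add: sum.distrib)
  finally show ?thesis by simp
qed

lemma H_nondeg:
  assumes hR: "h \<in> Rm m" and hz: "\<forall>j\<in>{1..m}. (\<Sum>k=1..m. H \<xi> j k * h k) = 0"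
  shows "h = (\<lambda>_. 0)"
proof -
  have "(\<Sum>j=1..m. h j * (\<Sum>k=1..m. H \<xi> j k * h k)) = 0" using hz by simp
  then have s: "(\<Sum>k=1..m. (2 * real n + W' (\<xi> k)) * (h k)\<^sup>2) + (\<Sum>k=1..m. \<Sum>l\<in>{1..m} - {k}. gg \<xi> h k l) = 0"
    unfolding quad .
  have nn: "\<forall>k\<in>{1..m}. 0 \<le> (2 * real n + W' (\<xi> k)) * (h k)\<^sup>2"
  proof
    fix k show "0 \<le> (2 * real n + W' (\<xi> k)) * (h k)\<^sup>2" using W'_lb[of "\<xi> k"] c0_pos by simp
  qed
  have "0 \<le> (\<Sum>k=1..m. (2 * real n + W' (\<xi> k)) * (h k)\<^sup>2)" by (rule sum_nonneg) (use nn in blast)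
  then have "(\<Sum>k=1..m. (2 * real n + W' (\<xi> k)) * (h k)\<^sup>2) = 0" using s gg_nonneg[of \<xi> h] by linarith
  then have z: "\<forall>k\<in>{1..m}. (2 * real n + W' (\<xi> k)) * (h k)\<^sup>2 = 0"
    using sum_nonneg_eq_0_iff[of "{1..m}" "\<lambda>k. (2 * real n + W' (\<xi> k)) * (h k)\<^sup>2"] nn by blast
  have "h k = 0" for k
  proof (cases "k \<in> {1..m}")
    case True
    have "0 < 2 * real n + W' (\<xi> k)" using W'_lb[of "\<xi> k"] c0_pos by simp
    moreover have "(2 * real n + W' (\<xi> k)) * (h k)\<^sup>2 = 0" using z True by blast
    ultimately show ?thesis by simp
  next
    case False then show ?thesis using hR unfolding Rm_def by simp
  qed
  then show ?thesis by (simp add: fun_eq_iff)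
qed

lemma V_morse: "morse_Rm m (V \<kappa>)"
  unfolding morse_Rm_def C2_Rm_def
proof (intro conjI ballI impI)
  fix \<xi> :: "nat \<Rightarrow> real" and j assume j: "j \<in> {1..m}"
  show "(\<lambda>t. V \<kappa> (\<xi>(j := t))) differentiable at (\<xi> j)"
    using V_deriv_G[OF j] real_differentiable_def by blast
  fix k assume k: "k \<in> {1..m}"
  have e: "(\<lambda>t. pd (V \<kappa>) (\<xi>(j := t)) k) = (\<lambda>t. G \<kappa> (\<xi>(j := t)) k)" using pd_eq[OF k] by simp
  show "(\<lambda>t. pd (V \<kappa>) (\<xi>(j := t)) k) differentiable at (\<xi> j)"
    unfolding e using G_deriv real_differentiable_def by blast
next
  fix j assume j: "j \<in> {1..m}"
  have e: "(\<lambda>\<xi>. pd (V \<kappa>) \<xi> j) = (\<lambda>\<xi>. G \<kappa> \<xi> j)" using pd_eq[OF j] by simp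
  show "continuous_on (Rm m) (\<lambda>\<xi>. pd (V \<kappa>) \<xi> j)" unfolding e by (rule G_cont)
next
  fix j k assume j: "j \<in> {1..m}" and k: "k \<in> {1..m}"
  have e: "(\<lambda>\<xi>. hess (V \<kappa>) \<xi> j k) = (\<lambda>\<xi>. H \<xi> j k)" using hess_eq[OF j k] by simp
  show "continuous_on (Rm m) (\<lambda>\<xi>. hess (V \<kappa>) \<xi> j k)" unfolding e by (rule H_cont)
next
  fix \<xi> h :: "nat \<Rightarrow> real"
  assume hR: "h \<in> Rm m" and hz: "\<forall>j\<in>{1..m}. (\<Sum>k=1..m. hess (V \<kappa>) \<xi> j k * h k) = 0"
  have "\<forall>j\<in>{1..m}. (\<Sum>k=1..m. H \<xi> j k * h k) = 0"
  proof
    fix j assume j: "j \<in> {1..m}"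
    have "(\<Sum>k=1..m. H \<xi> j k * h k) = (\<Sum>k=1..m. hess (V \<kappa>) \<xi> j k * h k)"
      by (rule sum.cong[OF refl]) (simp add: hess_eq[OF j])
    then show "(\<Sum>k=1..m. H \<xi> j k * h k) = 0" using hz j by simp
  qed
  then show "h = (\<lambda>_. 0)" by (rule H_nondeg[OF hR])
qed

end


context ctx begin

definition R4 :: real where "R4 = ratio pp + ratio qp + ratio pm + ratio qm"

lemma wq_sl: "y \<le> x \<Longrightarrow> inverse (ratio q) * (x - y) \<le> wf q x - wf q y \<and> wf q x - wf q y \<le> ratio q * (x - y)"
  using wf_slope[OF aq] by blast

lemma W_sl: assumes "y \<le> x" shows "c0 * (x - y) \<le> W x - W y \<and> W x - W y \<le> R4 * (x - y)"
proof -
  note a = wf_slope[OF app assms] wf_slope[OF aqp assms] wf_slope[OF apm assms] wf_slope[OF aqm assms]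
  have "c0 * (x - y) = inverse (ratio pp) * (x - y) + inverse (ratio qp) * (x - y) + inverse (ratio pm) * (x - y) + inverse (ratio qm) * (x - y)"
    unfolding c0_def by (simp add: algebra_simps)
  moreover have "R4 * (x - y) = ratio pp * (x - y) + ratio qp * (x - y) + ratio pm * (x - y) + ratio qm * (x - y)"
    unfolding R4_def by (simp add: algebra_simps)
  moreover have "W x - W y = (wf pp x - wf pp y) + (wf qp x - wf qp y) + (wf pm x - wf pm y) + (wf qm x - wf qm y)"
    unfolding W_def by simp
  ultimately show ?thesis using a by linarith
qed

lemma W_mono: "y \<le> x \<Longrightarrow> W y \<le> W x"
  using W_strict[of y x] by (cases "x = y") auto

lemma W0: "W 0 = 0" by (simp add: W_def)

lemma wf_pi_val: "wf a pi = pi" using wf_pi[of a 0] by simp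

lemma Wpi: "W pi = 4 * pi" by (simp add: W_def wf_pi_val)

lemma rq_pos: "0 < ratio q" using ratio_pos[OF aq] .
lemma R4_pos: "0 < R4" unfolding R4_def using ratio_pos app aqp apm aqm by (simp add: add_pos_pos)

lemma card_minus1: "j \<in> {1..m} \<Longrightarrow> real (card ({1..m} - {j})) = real m - 1"
proof -
  assume j: "j \<in> {1..m}"
  then have "card ({1..m} - {j}) = m - 1" by simp
  moreover have "1 \<le> m" using j by simp
  ultimately show ?thesis by simp
qed

lemma sum_le_const: "(\<And>l. l \<in> S \<Longrightarrow> f l \<le> c) \<Longrightarrow> sum f S \<le> real (card S) * (c::real)"
  using sum_mono[of S f "\<lambda>_. c"] by simp

lemma sum_ge_const: "(\<And>l. l \<in> S \<Longrightarrow> c \<le> f l) \<Longrightarrow> real (card S) * (c::real) \<le> sum f S"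
  using sum_mono[of S "\<lambda>_. c" f] by simp

lemma cc_pos: "\<kappa> \<in> Lambda m n \<Longrightarrow> j \<in> {1..m} \<Longrightarrow> 1 \<le> cc \<kappa> j"
  unfolding cc_def by auto

lemma single:
  assumes kL: "\<kappa> \<in> Lambda m n" and j: "j \<in> {1..m}" and Gz: "G \<kappa> \<xi> j = 0"
  shows "0 < \<xi> j" "\<xi> j < pi"
    "pi * (real m + 1 - real j + real (\<kappa> j)) / (real n + Kplus m q pp qp pm qm) \<le> \<xi> j"
    "\<xi> j \<le> pi * (real m + 1 - real j + real (\<kappa> j)) / (real n + Kminus m q pp qp pm qm)"
proof -
  define t where "t = \<xi> j"
  define S where "S = (\<Sum>l\<in>{1..m} - {j}. wf q (\<xi> j + \<xi> l) + wf q (\<xi> j - \<xi> l))"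
  have eq: "2 * real n * t + W t + S = 2 * pi * cc \<kappa> j" using Gz unfolding G_def t_def S_def by linarith
  have tm: "wf q (\<xi> j + \<xi> l) + wf q (\<xi> j - \<xi> l) = wf q (\<xi> l + t) - wf q (\<xi> l - t)" for l
  proof -
    have "wf q (\<xi> j - \<xi> l) = - wf q (\<xi> l - \<xi> j)" using wf_odd[of q "\<xi> l - \<xi> j"] by simp
    then show ?thesis unfolding t_def by (simp add: add.commute)
  qed
  have cc1: "1 \<le> cc \<kappa> j" by (rule cc_pos[OF kL j])
  have ccm: "cc \<kappa> j \<le> real m + real n" using cc_bounds[OF kL j] by simp
  have cardm: "real (card ({1..m} - {j})) = real m - 1" by (rule card_minus1[OF j])
  have m1: "1 \<le> real m" using j by simp
  show pos: "0 < \<xi> j"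
  proof (rule ccontr)
    assume "\<not> 0 < \<xi> j"
    then have t0: "t \<le> 0" unfolding t_def by simp
    have "S \<le> 0" unfolding S_def
    proof (rule sum_nonpos)
      fix l
      have "wf q (\<xi> l + t) \<le> wf q (\<xi> l - t)" using t0 by (intro wfq_mono) simp
      then show "wf q (\<xi> j + \<xi> l) + wf q (\<xi> j - \<xi> l) \<le> 0" unfolding tm by simp
    qed
    moreover have "W t \<le> 0" using W_mono[OF t0] W0 by simp
    moreover have "2 * real n * t \<le> 0" using t0 by (simp add: mult_nonneg_nonpos)
    ultimately show False using eq cc1 pi_gt_zero by (smt (verit) mult_pos_pos)
  qed
  then have tp: "0 < t" unfolding t_def .
  show "\<xi> j < pi"
  proof (rule ccontr)
    assume "\<not> \<xi> j < pi"
    then have tpi: "pi \<le> t" unfolding t_def by simp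
    have "real (card ({1..m} - {j})) * (2 * pi) \<le> S" unfolding S_def
    proof (rule sum_ge_const)
      fix l
      have "wf q (pi + \<xi> l) \<le> wf q (\<xi> j + \<xi> l)" using tpi unfolding t_def by (intro wfq_mono) simp
      moreover have "wf q (pi - \<xi> l) \<le> wf q (\<xi> j - \<xi> l)" using tpi unfolding t_def by (intro wfq_mono) simp
      moreover have "wf q (pi + \<xi> l) + wf q (pi - \<xi> l) = 2 * pi" by (rule wf_pi)
      ultimately show "2 * pi \<le> wf q (\<xi> j + \<xi> l) + wf q (\<xi> j - \<xi> l)" by linarith
    qed
    then have Sg: "(real m - 1) * (2 * pi) \<le> S" unfolding cardm .
    have Wg: "4 * pi \<le> W t" using W_mono[OF tpi] Wpi by simp
    have ng: "2 * real n * pi \<le> 2 * real n * t" using tpi by (simp add: mult_left_mono)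
    have "2 * pi * cc \<kappa> j \<le> 2 * pi * (real m + real n)" using ccm by simp
    then show False using eq Sg Wg ng pi_gt_zero by (simp add: algebra_simps)
  qed
  have Kp: "Kplus m q pp qp pm qm = (real m - 1) * ratio q + R4 / 2" unfolding Kplus_def R4_def by simp
  have Km: "Kminus m q pp qp pm qm = (real m - 1) * inverse (ratio q) + c0 / 2" unfolding Kminus_def c0_def by simp
  have Sle: "S \<le> (real m - 1) * (ratio q * (2 * t))" unfolding S_def cardm[symmetric]
  proof (rule sum_le_const)
    fix l
    have "wf q (\<xi> l + t) - wf q (\<xi> l - t) \<le> ratio q * ((\<xi> l + t) - (\<xi> l - t))" using wq_sl[of "\<xi> l - t" "\<xi> l + t"] tp by simp
    then show "wf q (\<xi> j + \<xi> l) + wf q (\<xi> j - \<xi> l) \<le> ratio q * (2 * t)" unfolding tm by simp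
  qed
  have Sge: "(real m - 1) * (inverse (ratio q) * (2 * t)) \<le> S" unfolding S_def cardm[symmetric]
  proof (rule sum_ge_const)
    fix l
    have "inverse (ratio q) * ((\<xi> l + t) - (\<xi> l - t)) \<le> wf q (\<xi> l + t) - wf q (\<xi> l - t)" using wq_sl[of "\<xi> l - t" "\<xi> l + t"] tp by simp
    then show "inverse (ratio q) * (2 * t) \<le> wf q (\<xi> j + \<xi> l) + wf q (\<xi> j - \<xi> l)" unfolding tm by simp
  qed
  have Wb: "c0 * t \<le> W t" "W t \<le> R4 * t" using W_sl[of 0 t] tp W0 by auto
  have Kp0: "0 < real n + Kplus m q pp qp pm qm"
  proof -
    have "0 \<le> (real m - 1) * ratio q" using m1 rq_pos by simp
    then show ?thesis unfolding Kp using R4_pos by simp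
  qed
  have Km0: "0 < real n + Kminus m q pp qp pm qm"
  proof -
    have "0 \<le> (real m - 1) * inverse (ratio q)" using m1 rq_pos by simp
    then show ?thesis unfolding Km using c0_pos by simp
  qed
  have e1: "(real m - 1) * (ratio q * (2 * t)) = 2 * ((real m - 1) * ratio q * t)" by (simp add: algebra_simps)
  have e2: "(real m - 1) * (inverse (ratio q) * (2 * t)) = 2 * ((real m - 1) * inverse (ratio q) * t)" by (simp add: algebra_simps)
  have up: "pi * cc \<kappa> j \<le> (real n + Kplus m q pp qp pm qm) * t"
  proof -
    have "(real n + Kplus m q pp qp pm qm) * t = real n * t + (real m - 1) * ratio q * t + R4 * t / 2"
      unfolding Kp by (simp add: algebra_simps)
    then show ?thesis using eq Sle Wb e1 by linarith
  qed
  have lo: "(real n + Kminus m q pp qp pm qm) * t \<le> pi * cc \<kappa> j"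
  proof -
    have "(real n + Kminus m q pp qp pm qm) * t = real n * t + (real m - 1) * inverse (ratio q) * t + c0 * t / 2"
      unfolding Km by (simp add: algebra_simps)
    then show ?thesis using eq Sge Wb e2 by linarith
  qed
  show "pi * (real m + 1 - real j + real (\<kappa> j)) / (real n + Kplus m q pp qp pm qm) \<le> \<xi> j"
    using up Kp0 unfolding cc_def t_def by (simp add: pos_divide_le_eq mult.commute)
  show "\<xi> j \<le> pi * (real m + 1 - real j + real (\<kappa> j)) / (real n + Kminus m q pp qp pm qm)"
    using lo Km0 unfolding cc_def t_def by (simp add: pos_le_divide_eq mult.commute)
qed

end


context ctx begin

lemma pair:
  assumes kL: "\<kappa> \<in> Lambda m n" and j: "j \<in> {1..m}" and i: "i \<in> {1..m}" and ji: "j < i"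
    and Gj: "G \<kappa> \<xi> j = 0" and Gi: "G \<kappa> \<xi> i = 0"
  shows "\<xi> i < \<xi> j"
    "pi * (real i - real j + real (\<kappa> j) - real (\<kappa> i)) / (real n + Kplus m q pp qp pm qm) \<le> \<xi> j - \<xi> i"
    "\<xi> j - \<xi> i \<le> pi * (real i - real j + real (\<kappa> j) - real (\<kappa> i)) / (real n + Kminus m q pp qp pm qm)"
proof -
  define d where "d = \<xi> j - \<xi> i"
  define B where "B = {1..m} - {j} - {i}"
  define F where "F = (\<lambda>x l. wf q (x + \<xi> l) + wf q (x - \<xi> l))"
  have fB: "finite B" unfolding B_def by simp
  have Aj: "{1..m} - {j} = insert i B" "i \<notin> B" unfolding B_def using i ji by auto
  have Ai: "{1..m} - {i} = insert j B" "j \<notin> B" unfolding B_def using j ji by auto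
  have Sj: "(\<Sum>k\<in>{1..m} - {j}. wf q (\<xi> j + \<xi> k) + wf q (\<xi> j - \<xi> k)) = F (\<xi> j) i + (\<Sum>l\<in>B. F (\<xi> j) l)"
    unfolding Aj(1) F_def using fB Aj(2) by simp
  have Si: "(\<Sum>k\<in>{1..m} - {i}. wf q (\<xi> i + \<xi> k) + wf q (\<xi> i - \<xi> k)) = F (\<xi> i) j + (\<Sum>l\<in>B. F (\<xi> i) l)"
    unfolding Ai(1) F_def using fB Ai(2) by simp
  have Fd: "F (\<xi> j) i - F (\<xi> i) j = 2 * wf q d"
  proof -
    have "wf q (\<xi> i - \<xi> j) = - wf q d" unfolding d_def using wf_odd[of q "\<xi> j - \<xi> i"] by simp
    then show ?thesis unfolding F_def d_def by (simp add: add.commute)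
  qed
  have sdiff: "(\<Sum>l\<in>B. F (\<xi> j) l) - (\<Sum>l\<in>B. F (\<xi> i) l) = (\<Sum>l\<in>B. F (\<xi> j) l - F (\<xi> i) l)"
    by (simp add: sum_subtractf)
  define E where "E = (\<Sum>l\<in>B. F (\<xi> j) l - F (\<xi> i) l)"
  have ccd: "cc \<kappa> j - cc \<kappa> i = real i - real j + real (\<kappa> j) - real (\<kappa> i)" unfolding cc_def by simp
  have kji: "\<kappa> i \<le> \<kappa> j" using kL j i ji unfolding Lambda_def by auto
  have rpos: "1 \<le> real i - real j + real (\<kappa> j) - real (\<kappa> i)" using kji ji by simp
  have eq: "2 * real n * d + (W (\<xi> j) - W (\<xi> i)) + 2 * wf q d + E = 2 * pi * (real i - real j + real (\<kappa> j) - real (\<kappa> i))"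
  proof -
    have a: "2 * real n * \<xi> j + W (\<xi> j) + (F (\<xi> j) i + (\<Sum>l\<in>B. F (\<xi> j) l)) - 2 * pi * cc \<kappa> j = 0"
      using Gj unfolding G_def Sj .
    have b: "2 * real n * \<xi> i + W (\<xi> i) + (F (\<xi> i) j + (\<Sum>l\<in>B. F (\<xi> i) l)) - 2 * pi * cc \<kappa> i = 0"
      using Gi unfolding G_def Si .
    have c: "2 * real n * d = 2 * real n * \<xi> j - 2 * real n * \<xi> i" unfolding d_def by (simp add: algebra_simps)
    have e: "2 * pi * (real i - real j + real (\<kappa> j) - real (\<kappa> i)) = 2 * pi * cc \<kappa> j - 2 * pi * cc \<kappa> i"
      unfolding ccd[symmetric] by (simp add: algebra_simps)
    show ?thesis using a b c e Fd sdiff unfolding E_def by linarith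
  qed
  have cardB: "real (card B) = real m - 2"
  proof -
    have "card B = m - 2" unfolding B_def using i j ji by (simp add: card_Diff_singleton)
    moreover have "2 \<le> m" using i j ji by simp
    ultimately show ?thesis by simp
  qed
  have tl: "F (\<xi> j) l - F (\<xi> i) l = (wf q (\<xi> j + \<xi> l) - wf q (\<xi> i + \<xi> l)) + (wf q (\<xi> j - \<xi> l) - wf q (\<xi> i - \<xi> l))" for l
    unfolding F_def by simp
  show "\<xi> i < \<xi> j"
  proof (rule ccontr)
    assume "\<not> \<xi> i < \<xi> j"
    then have d0: "d \<le> 0" unfolding d_def by simp
    have "E \<le> 0" unfolding E_def
    proof (rule sum_nonpos)
      fix l
      have "wf q (\<xi> j + \<xi> l) \<le> wf q (\<xi> i + \<xi> l)" using d0 unfolding d_def by (intro wfq_mono) simp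
      moreover have "wf q (\<xi> j - \<xi> l) \<le> wf q (\<xi> i - \<xi> l)" using d0 unfolding d_def by (intro wfq_mono) simp
      ultimately show "F (\<xi> j) l - F (\<xi> i) l \<le> 0" unfolding tl by simp
    qed
    moreover have "W (\<xi> j) - W (\<xi> i) \<le> 0" using W_mono[of "\<xi> j" "\<xi> i"] d0 unfolding d_def by simp
    moreover have "wf q d \<le> 0" using wfq_mono[OF d0] by simp
    moreover have "2 * real n * d \<le> 0" using d0 by (simp add: mult_nonneg_nonpos)
    moreover have "2 * pi \<le> 2 * pi * (real i - real j + real (\<kappa> j) - real (\<kappa> i))" using rpos by simp
    ultimately show False using eq pi_gt_zero by linarith
  qed
  then have dp: "0 < d" unfolding d_def by simp
  have Kp: "Kplus m q pp qp pm qm = (real m - 1) * ratio q + R4 / 2" unfolding Kplus_def R4_def by simp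
  have Km: "Kminus m q pp qp pm qm = (real m - 1) * inverse (ratio q) + c0 / 2" unfolding Kminus_def c0_def by simp
  have m1: "1 \<le> real m" using j by simp
  have Ele: "E \<le> (real m - 2) * (2 * (ratio q * d))" unfolding E_def cardB[symmetric]
  proof (rule sum_le_const)
    fix l
    have "wf q (\<xi> j + \<xi> l) - wf q (\<xi> i + \<xi> l) \<le> ratio q * ((\<xi> j + \<xi> l) - (\<xi> i + \<xi> l))"
      using wq_sl[of "\<xi> i + \<xi> l" "\<xi> j + \<xi> l"] dp unfolding d_def by simp
    moreover have "wf q (\<xi> j - \<xi> l) - wf q (\<xi> i - \<xi> l) \<le> ratio q * ((\<xi> j - \<xi> l) - (\<xi> i - \<xi> l))"
      using wq_sl[of "\<xi> i - \<xi> l" "\<xi> j - \<xi> l"] dp unfolding d_def by simp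
    ultimately show "F (\<xi> j) l - F (\<xi> i) l \<le> 2 * (ratio q * d)" unfolding tl d_def by simp
  qed
  have Ege: "(real m - 2) * (2 * (inverse (ratio q) * d)) \<le> E" unfolding E_def cardB[symmetric]
  proof (rule sum_ge_const)
    fix l
    have "inverse (ratio q) * ((\<xi> j + \<xi> l) - (\<xi> i + \<xi> l)) \<le> wf q (\<xi> j + \<xi> l) - wf q (\<xi> i + \<xi> l)"
      using wq_sl[of "\<xi> i + \<xi> l" "\<xi> j + \<xi> l"] dp unfolding d_def by simp
    moreover have "inverse (ratio q) * ((\<xi> j - \<xi> l) - (\<xi> i - \<xi> l)) \<le> wf q (\<xi> j - \<xi> l) - wf q (\<xi> i - \<xi> l)"
      using wq_sl[of "\<xi> i - \<xi> l" "\<xi> j - \<xi> l"] dp unfolding d_def by simp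
    ultimately show "2 * (inverse (ratio q) * d) \<le> F (\<xi> j) l - F (\<xi> i) l" unfolding tl d_def by simp
  qed
  have Wb: "c0 * d \<le> W (\<xi> j) - W (\<xi> i)" "W (\<xi> j) - W (\<xi> i) \<le> R4 * d"
    using W_sl[of "\<xi> i" "\<xi> j"] dp unfolding d_def by auto
  have wb: "inverse (ratio q) * d \<le> wf q d" "wf q d \<le> ratio q * d"
    using wq_sl[of 0 d] dp by auto
  have Kp0: "0 < real n + Kplus m q pp qp pm qm"
  proof -
    have "0 \<le> (real m - 1) * ratio q" using m1 rq_pos by simp
    then show ?thesis unfolding Kp using R4_pos by simp
  qed
  have Km0: "0 < real n + Kminus m q pp qp pm qm"
  proof -
    have "0 \<le> (real m - 1) * inverse (ratio q)" using m1 rq_pos by simp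
    then show ?thesis unfolding Km using c0_pos by simp
  qed
  define c where "c = real i - real j + real (\<kappa> j) - real (\<kappa> i)"
  have up: "pi * c \<le> (real n + Kplus m q pp qp pm qm) * d"
  proof -
    have "(real n + Kplus m q pp qp pm qm) * d = real n * d + (real m - 2) * (ratio q * d) + ratio q * d + R4 * d / 2"
      unfolding Kp by (simp add: algebra_simps)
    moreover have "(real m - 2) * (2 * (ratio q * d)) = 2 * ((real m - 2) * (ratio q * d))" by simp
    ultimately show ?thesis using eq Ele Wb wb unfolding c_def by linarith
  qed
  have lo: "(real n + Kminus m q pp qp pm qm) * d \<le> pi * c"
  proof -
    have "(real n + Kminus m q pp qp pm qm) * d = real n * d + (real m - 2) * (inverse (ratio q) * d) + inverse (ratio q) * d + c0 * d / 2"
      unfolding Km by (simp add: algebra_simps)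
    moreover have "(real m - 2) * (2 * (inverse (ratio q) * d)) = 2 * ((real m - 2) * (inverse (ratio q) * d))" by simp
    ultimately show ?thesis using eq Ege Wb wb unfolding c_def by linarith
  qed
  show "pi * (real i - real j + real (\<kappa> j) - real (\<kappa> i)) / (real n + Kplus m q pp qp pm qm) \<le> \<xi> j - \<xi> i"
    using up Kp0 unfolding c_def d_def by (simp add: pos_divide_le_eq mult.commute)
  show "\<xi> j - \<xi> i \<le> pi * (real i - real j + real (\<kappa> j) - real (\<kappa> i)) / (real n + Kminus m q pp qp pm qm)"
    using lo Km0 unfolding c_def d_def by (simp add: pos_le_divide_eq mult.commute)
qed

end


theorem proposition4p1:
  fixes m n :: nat and q pp qp pm qm :: real
  assumes "q \<in> {-1<..<1} - {0}"
    and "pp \<in> {-1<..<1} - {0}" and "qp \<in> {-1<..<1} - {0}"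
    and "pm \<in> {-1<..<1} - {0}" and "qm \<in> {-1<..<1} - {0}"
  shows
    "(\<forall>\<kappa>\<in>Lambda m n.
        (\<exists>!\<xi>. \<xi> \<in> Rm m \<and> BAE m n q pp qp pm qm \<kappa> \<xi>)
      \<and> strictly_convex_Rm m (Vfun m n q pp qp pm qm \<kappa>)
      \<and> radially_unbounded_Rm m (Vfun m n q pp qp pm qm \<kappa>)
      \<and> morse_Rm m (Vfun m n q pp qp pm qm \<kappa>)
      \<and> (\<forall>\<xi>\<in>Rm m. BAE m n q pp qp pm qm \<kappa> \<xi> \<longrightarrow>
           (\<forall>\<eta>\<in>Rm m. Vfun m n q pp qp pm qm \<kappa> \<xi> \<le> Vfun m n q pp qp pm qm \<kappa> \<eta>)))
   \<and> (\<forall>\<kappa>\<in>Lambda m n. \<forall>\<kappa>'\<in>Lambda m n. \<forall>\<xi>\<in>Rm m. \<forall>\<xi>'\<in>Rm m.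
        BAE m n q pp qp pm qm \<kappa> \<xi> \<longrightarrow> BAE m n q pp qp pm qm \<kappa>' \<xi>' \<longrightarrow> \<kappa> \<noteq> \<kappa>' \<longrightarrow> \<xi> \<noteq> \<xi>')
   \<and> (\<forall>\<kappa>\<in>Lambda m n. \<forall>\<xi>\<in>Rm m. BAE m n q pp qp pm qm \<kappa> \<xi> \<longrightarrow>
        (\<forall>j\<in>{1..m}. 0 < \<xi> j \<and> \<xi> j < pi)
      \<and> (\<forall>j k. 1 \<le> j \<longrightarrow> j < k \<longrightarrow> k \<le> m \<longrightarrow> \<xi> k < \<xi> j)
      \<and> (\<forall>j\<in>{1..m}.
           pi * (real m + 1 - real j + real (\<kappa> j)) / (real n + Kplus m q pp qp pm qm) \<le> \<xi> j
         \<and> \<xi> j \<le> pi * (real m + 1 - real j + real (\<kappa> j)) / (real n + Kminus m q pp qp pm qm))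
      \<and> (\<forall>j k. 1 \<le> j \<longrightarrow> j < k \<longrightarrow> k \<le> m \<longrightarrow>
           pi * (real k - real j + real (\<kappa> j) - real (\<kappa> k)) / (real n + Kplus m q pp qp pm qm)
             \<le> \<xi> j - \<xi> k
         \<and> \<xi> j - \<xi> k
             \<le> pi * (real k - real j + real (\<kappa> j) - real (\<kappa> k)) / (real n + Kminus m q pp qp pm qm)))"
proof -
  have ab: "\<bar>a\<bar> < 1" if "a \<in> {-1<..<1} - {0}" for a :: real using that by auto
  interpret c: ctx m n q pp qp pm qm
    by unfold_locales (use ab assms in auto)
  have P1: "(\<exists>!\<xi>. \<xi> \<in> Rm m \<and> BAE m n q pp qp pm qm \<kappa> \<xi>)
      \<and> strictly_convex_Rm m (Vfun m n q pp qp pm qm \<kappa>)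
      \<and> radially_unbounded_Rm m (Vfun m n q pp qp pm qm \<kappa>)
      \<and> morse_Rm m (Vfun m n q pp qp pm qm \<kappa>)
      \<and> (\<forall>\<xi>\<in>Rm m. BAE m n q pp qp pm qm \<kappa> \<xi> \<longrightarrow>
           (\<forall>\<eta>\<in>Rm m. Vfun m n q pp qp pm qm \<kappa> \<xi> \<le> Vfun m n q pp qp pm qm \<kappa> \<eta>))"
    if kL: "\<kappa> \<in> Lambda m n" for \<kappa>
  proof (intro conjI)
    obtain \<xi> where x: "\<xi> \<in> Rm m" "\<forall>j\<in>{1..m}. c.G \<kappa> \<xi> j = 0" using c.BAE_exists[OF kL] by blast
    show "\<exists>!\<xi>. \<xi> \<in> Rm m \<and> BAE m n q pp qp pm qm \<kappa> \<xi>"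
    proof (rule ex1I[of _ \<xi>])
      show "\<xi> \<in> Rm m \<and> BAE m n q pp qp pm qm \<kappa> \<xi>" using x c.BAE_iff by simp
      fix y assume "y \<in> Rm m \<and> BAE m n q pp qp pm qm \<kappa> y"
      then show "y = \<xi>" using c.BAE_unique[of \<kappa> y \<xi>] x c.BAE_iff by simp
    qed
    show "strictly_convex_Rm m (Vfun m n q pp qp pm qm \<kappa>)" by (rule c.V_sconv)
    show "radially_unbounded_Rm m (Vfun m n q pp qp pm qm \<kappa>)" by (rule c.V_radial[OF kL])
    show "morse_Rm m (Vfun m n q pp qp pm qm \<kappa>)" by (rule c.V_morse)
    show "\<forall>\<xi>\<in>Rm m. BAE m n q pp qp pm qm \<kappa> \<xi> \<longrightarrow>
           (\<forall>\<eta>\<in>Rm m. Vfun m n q pp qp pm qm \<kappa> \<xi> \<le> Vfun m n q pp qp pm qm \<kappa> \<eta>)"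
      using c.V_min c.BAE_iff by blast
  qed
  have P2: "\<xi> \<noteq> \<xi>'" if kL: "\<kappa> \<in> Lambda m n" and kL': "\<kappa>' \<in> Lambda m n"
    and b: "BAE m n q pp qp pm qm \<kappa> \<xi>" and b': "BAE m n q pp qp pm qm \<kappa>' \<xi>'" and kk: "\<kappa> \<noteq> \<kappa>'" for \<kappa> \<kappa>' \<xi> \<xi>'
  proof
    assume e: "\<xi> = \<xi>'"
    have "\<kappa> j = \<kappa>' j" for j
    proof (cases "j \<in> {1..m}")
      case True
      have "c.G \<kappa> \<xi> j = 0" "c.G \<kappa>' \<xi> j = 0" using b b' e True c.BAE_iff by auto
      then have "c.cc \<kappa> j = c.cc \<kappa>' j" unfolding c.G_def by simp
      then show ?thesis unfolding c.cc_def by simp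
    next
      case False then show ?thesis using kL kL' unfolding Lambda_def by auto
    qed
    then show False using kk by (simp add: fun_eq_iff)
  qed
  have P3: "(\<forall>j\<in>{1..m}. 0 < \<xi> j \<and> \<xi> j < pi)
      \<and> (\<forall>j k. 1 \<le> j \<longrightarrow> j < k \<longrightarrow> k \<le> m \<longrightarrow> \<xi> k < \<xi> j)
      \<and> (\<forall>j\<in>{1..m}.
           pi * (real m + 1 - real j + real (\<kappa> j)) / (real n + Kplus m q pp qp pm qm) \<le> \<xi> j
         \<and> \<xi> j \<le> pi * (real m + 1 - real j + real (\<kappa> j)) / (real n + Kminus m q pp qp pm qm))
      \<and> (\<forall>j k. 1 \<le> j \<longrightarrow> j < k \<longrightarrow> k \<le> m \<longrightarrow>
           pi * (real k - real j + real (\<kappa> j) - real (\<kappa> k)) / (real n + Kplus m q pp qp pm qm)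
             \<le> \<xi> j - \<xi> k
         \<and> \<xi> j - \<xi> k
             \<le> pi * (real k - real j + real (\<kappa> j) - real (\<kappa> k)) / (real n + Kminus m q pp qp pm qm))"
    if kL: "\<kappa> \<in> Lambda m n" and b: "BAE m n q pp qp pm qm \<kappa> \<xi>" for \<kappa> \<xi>
  proof -
    have Gz: "\<forall>j\<in>{1..m}. c.G \<kappa> \<xi> j = 0" using b c.BAE_iff by simp
    show ?thesis
    proof (intro conjI ballI allI impI)
      fix j assume j: "j \<in> {1..m}"
      note s = c.single[OF kL j Gz[rule_format, OF j]]
      show "0 < \<xi> j" by (rule s(1))
      show "\<xi> j < pi" by (rule s(2))
      show "pi * (real m + 1 - real j + real (\<kappa> j)) / (real n + Kplus m q pp qp pm qm) \<le> \<xi> j" by (rule s(3))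
      show "\<xi> j \<le> pi * (real m + 1 - real j + real (\<kappa> j)) / (real n + Kminus m q pp qp pm qm)" by (rule s(4))
    next
      fix j k :: nat assume a: "1 \<le> j" "j < k" "k \<le> m"
      have j: "j \<in> {1..m}" and k: "k \<in> {1..m}" using a by auto
      note p = c.pair[OF kL j k a(2) Gz[rule_format, OF j] Gz[rule_format, OF k]]
      show "\<xi> k < \<xi> j" by (rule p(1))
    next
      fix j k :: nat assume a: "1 \<le> j" "j < k" "k \<le> m"
      have j: "j \<in> {1..m}" and k: "k \<in> {1..m}" using a by auto
      note p = c.pair[OF kL j k a(2) Gz[rule_format, OF j] Gz[rule_format, OF k]]
      show "pi * (real k - real j + real (\<kappa> j) - real (\<kappa> k)) / (real n + Kplus m q pp qp pm qm) \<le> \<xi> j - \<xi> k"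
        by (rule p(2))
    next
      fix j k :: nat assume a: "1 \<le> j" "j < k" "k \<le> m"
      have j: "j \<in> {1..m}" and k: "k \<in> {1..m}" using a by auto
      note p = c.pair[OF kL j k a(2) Gz[rule_format, OF j] Gz[rule_format, OF k]]
      show "\<xi> j - \<xi> k \<le> pi * (real k - real j + real (\<kappa> j) - real (\<kappa> k)) / (real n + Kminus m q pp qp pm qm)"
        by (rule p(3))
    qed
  qed
  show ?thesis using P1 P2 P3 by blast
qed

end
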